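(* Let $g:[a,b]\to\mathbb R$ be a derivator. Then ${\rm P}_g$ is dense in $L^2_g([a,b])$ if and only if ${\rm P}_g$ is dense in $\mathrm{UC}_g([a,b])$ (with respect to the supremum norm).
   Context: $\mathbb F\in\{\mathbb R,\mathbb C\}$. A derivator is a nondecreasing, left-continuous $g:[a,b]\to\mathbb R$; $\mu_g$ is its Lebesgue–Stieltjes measure ($\mu_g([c,d))=g(d)-g(c)$). For $x_0\in[a,b]$, the $g$-monomials centered at $x_0$ are $g_{x_0,0}\equiv1$, $g_{x_0,n}(x)=n\int_{[x_0,x)}g_{x_0,n-1}\,d\mu_g$ for $x\ge x_0$ and $g_{x_0,n}(x)=-n\int_{[x,x_0)}g_{x_0,n-1}\,d\mu_g$ for $x<x_0$. ${\rm P}_g$ is the space of finite $\mathbb F$-linear combinations of $g$-monomials ($g$-polynomials). $L^2_g([a,b])$ is the Hilbert space of $\mu_g$-measurable $f:[a,b]\to\mathbb F$ with $\int_{[a,b)}|f|^2d\mu_g<\infty$. $\mathrm{UC}_g([a,b])$ is the Banach space (supremum norm) of uniformly $g$-continuous functions $f:[a,b]\to\mathbb F$: for every $\varepsilon>0$ there is $\delta>0$ with $|g(x)-g(y)|<\delta\Rightarrow|f(x)-f(y)|<\varepsilon$ for all $x,y$. *)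

theory Defs
  imports "HOL-Analysis.Analysis"
begin

definition derivator :: "(real \<Rightarrow> real) \<Rightarrow> real \<Rightarrow> real \<Rightarrow> bool" where
  "derivator g a b \<longleftrightarrow> a < b \<and> mono_on {a..b} g \<and>
     (\<forall>x\<in>{a<..b}. continuous (at_left x) g)"

definition gext :: "(real \<Rightarrow> real) \<Rightarrow> real \<Rightarrow> real \<Rightarrow> real \<Rightarrow> real" where
  "gext g a b x = g (max a (min b x))"

definition LS_measure :: "(real \<Rightarrow> real) \<Rightarrow> real \<Rightarrow> real \<Rightarrow> real measure" where
  "LS_measure g a b =
     extend_measure UNIV {(c, d). c \<le> d} (\<lambda>(c, d). {c..<d})
       (\<lambda>(c, d). ennreal (gext g a b d - gext g a b c))"

fun gmono :: "(real \<Rightarrow> real) \<Rightarrow> real \<Rightarrow> real \<Rightarrow> real \<Rightarrow> nat \<Rightarrow> real \<Rightarrow> real" where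
  "gmono g a b x0 0 x = 1"
| "gmono g a b x0 (Suc n) x =
     (if x0 \<le> x
      then real (Suc n) * (LINT y:{x0..<x}|LS_measure g a b. gmono g a b x0 n y)
      else - real (Suc n) * (LINT y:{x..<x0}|LS_measure g a b. gmono g a b x0 n y))"

definition gpolys :: "(real \<Rightarrow> real) \<Rightarrow> real \<Rightarrow> real \<Rightarrow> (real \<Rightarrow> 'f::real_normed_field) set" where
  "gpolys g a b = {p. \<exists>S c. finite S \<and> S \<subseteq> {a..b} \<times> UNIV \<and>
      p = (\<lambda>x. \<Sum>(x0, n)\<in>S. c (x0, n) * of_real (gmono g a b x0 n x))}"

definition in_L2g :: "(real \<Rightarrow> real) \<Rightarrow> real \<Rightarrow> real \<Rightarrow> (real \<Rightarrow> 'f::real_normed_field) \<Rightarrow> bool" where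
  "in_L2g g a b f \<longleftrightarrow> f \<in> borel_measurable (completion (LS_measure g a b)) \<and>
     (\<integral>\<^sup>+ x \<in> {a..<b}. ennreal ((norm (f x))\<^sup>2) \<partial>LS_measure g a b) < \<infinity>"

definition dense_L2g :: "(real \<Rightarrow> real) \<Rightarrow> real \<Rightarrow> real \<Rightarrow> (real \<Rightarrow> 'f::real_normed_field) set \<Rightarrow> bool" where
  "dense_L2g g a b P \<longleftrightarrow> (\<forall>f. in_L2g g a b f \<longrightarrow> (\<forall>e>0. \<exists>p\<in>P.
     (\<integral>\<^sup>+ x \<in> {a..<b}. ennreal ((norm (f x - p x))\<^sup>2) \<partial>LS_measure g a b) < ennreal e))"

definition UCg :: "(real \<Rightarrow> real) \<Rightarrow> real \<Rightarrow> real \<Rightarrow> (real \<Rightarrow> 'f::real_normed_field) \<Rightarrow> bool" where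
  "UCg g a b f \<longleftrightarrow> (\<forall>e>0. \<exists>d>0. \<forall>x\<in>{a..b}. \<forall>y\<in>{a..b}.
      \<bar>g x - g y\<bar> < d \<longrightarrow> norm (f x - f y) < e)"

definition dense_UCg :: "(real \<Rightarrow> real) \<Rightarrow> real \<Rightarrow> real \<Rightarrow> (real \<Rightarrow> 'f::real_normed_field) set \<Rightarrow> bool" where
  "dense_UCg g a b P \<longleftrightarrow> (\<forall>f. UCg g a b f \<longrightarrow> (\<forall>e>0. \<exists>p\<in>P.
     (SUP x\<in>{a..b}. ereal (norm (f x - p x))) < ereal e))"

end

theory Submission
  imports Defs
begin

lemma gext_mono:
  assumes "derivator g a b" "x \<le> y"
  shows "gext g a b x \<le> gext g a b y"
  using assms unfolding derivator_def gext_def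
  by (intro mono_onD[of "{a..b}" g]) auto

lemma gext_leftcont:
  assumes "derivator g a b"
  shows "continuous (at_left x) (gext g a b)"
proof -
  have ab: "a < b" and lc: "\<forall>x\<in>{a<..b}. continuous (at_left x) g" using assms by (auto simp: derivator_def)
  consider "x \<le> a" | "a < x" "x \<le> b" | "b < x" by linarith
  then show ?thesis
  proof cases
    case 1
    have "\<forall>\<^sub>F y in at_left x. gext g a b y = gext g a b x"
      unfolding eventually_at_left_field using 1 by (auto simp: gext_def intro!: exI[of _ "x - 1"])
    then show ?thesis unfolding continuous_within
      by (simp add: tendsto_eventually)
  next
    case 2
    have "\<forall>\<^sub>F y in at_left x. g y = gext g a b y"
      unfolding eventually_at_left_field using 2 by (auto simp: gext_def intro!: exI[of _ a])
    moreover have "(g \<longlongrightarrow> g x) (at_left x)" using lc 2 by (auto simp: continuous_within)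
    ultimately have "(gext g a b \<longlongrightarrow> g x) (at_left x)" by (metis Lim_transform_eventually)
    then show ?thesis using 2 by (simp add: continuous_within gext_def)
  next
    case 3
    have "\<forall>\<^sub>F y in at_left x. gext g a b y = gext g a b x"
      unfolding eventually_at_left_field using 3 by (auto simp: gext_def intro!: exI[of _ b])
    then show ?thesis unfolding continuous_within
      by (simp add: tendsto_eventually)
  qed
qed

lemma sets_LS[simp, measurable_cong]: "sets (LS_measure g a b) = sets borel"
  apply (simp add: sets_extend_measure LS_measure_def borel_eq_atLeastLessThan image_def split: prod.split)
  by (metis atLeastLessThan_empty nle_le)

lemma space_LS[simp]: "space (LS_measure g a b) = UNIV"
  by (simp add: LS_measure_def space_extend_measure)

lemma LS_Ico:
  assumes g: "derivator g a b" and "c \<le> d"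
  shows "emeasure (LS_measure g a b) {c..<d} = ennreal (gext g a b d - gext g a b c)"
proof -
  define F where "F x = - gext g a b (-x)" for x
  have monoF: "F x \<le> F y" if "x \<le> y" for x y
    using gext_mono[OF g, of "-y" "-x"] that by (simp add: F_def)
  have rcF: "continuous (at_right x) F" for x
  proof -
    have "((\<lambda>y. gext g a b y) \<longlongrightarrow> gext g a b (-x)) (at_left (-x))"
      using gext_leftcont[OF g, of "-x"] by (simp add: continuous_within)
    then have "((\<lambda>y. gext g a b (- y)) \<longlongrightarrow> gext g a b (-x)) (at_right x)"
      by (simp add: at_left_minus filterlim_filtermap)
    then have "(F \<longlongrightarrow> F x) (at_right x)" unfolding F_def by (intro tendsto_minus)
    then show ?thesis by (simp add: continuous_within)
  qed
  define N where "N = distr (interval_measure F) borel uminus"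
  have sN[simp]: "sets N = sets borel" by (simp add: N_def)
  have eN: "emeasure N {c..<d} = ennreal (gext g a b d - gext g a b c)" if "c \<le> d" for c d
  proof -
    have "uminus -` {c..<d} \<inter> space (interval_measure F) = {-d<..-c}" by auto
    then have "emeasure N {c..<d} = emeasure (interval_measure F) {-d<..-c}"
      by (simp add: N_def emeasure_distr)
    also have "\<dots> = F (-c) - F (-d)"
      using that by (intro emeasure_interval_measure_Ioc monoF rcF) auto
    finally show ?thesis by (simp add: F_def)
  qed
  show ?thesis
  proof (rule emeasure_extend_measure_Pair[OF LS_measure_def, where \<mu>'="emeasure N"])
    show "c \<le> d" by fact
    show "c \<le> d \<Longrightarrow> emeasure N {c..<d} = ennreal (gext g a b d - gext g a b c)" for c d by (rule eN)
    show "positive (sets (LS_measure g a b)) (emeasure N)" by (simp add: positive_def)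
    show "countably_additive (sets (LS_measure g a b)) (emeasure N)"
      using measure_space[of N] by (simp add: measure_space_def)
  qed simp
qed


lemma gext_below: "x \<le> a \<Longrightarrow> a \<le> b \<Longrightarrow> gext g a b x = g a"
  by (simp add: gext_def)
lemma gext_above: "b \<le> x \<Longrightarrow> a \<le> b \<Longrightarrow> gext g a b x = g b"
  by (simp add: gext_def)
lemma gext_in: "a \<le> x \<Longrightarrow> x \<le> b \<Longrightarrow> gext g a b x = g x"
  by (simp add: gext_def)

lemma LS_outside_null:
  assumes g: "derivator g a b"
  shows "UNIV - {a..<b} \<in> null_sets (LS_measure g a b)"
proof -
  have ab: "a \<le> b" using g by (auto simp: derivator_def)
  have e: "UNIV - {a..<b} = (\<Union>n::nat. {a - real n..<a}) \<union> (\<Union>n::nat. {b..<b + real n})"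
  proof -
    have A1: "\<exists>n::nat. a - real n \<le> x" for x :: real
      using reals_Archimedean2[of "a - x"] by (metis diff_le_eq less_eq_real_def add.commute diff_less_eq)
    have A2: "\<exists>n::nat. x < b + real n" for x :: real
      using reals_Archimedean2[of "x - b"] by (metis add.commute diff_less_eq)
    show ?thesis using A1 A2 by (auto simp: not_less)
  qed
  have n1: "{a - real n..<a} \<in> null_sets (LS_measure g a b)" for n
    using LS_Ico[OF g, of "a - real n" a] ab by (simp add: null_sets_def gext_below)
  have n2: "{b..<b + real n} \<in> null_sets (LS_measure g a b)" for n
    using LS_Ico[OF g, of b "b + real n"] ab by (simp add: null_sets_def gext_above)
  show ?thesis unfolding e
    using n1 n2 by (intro null_sets.Un null_sets_UN) auto
qed

lemma LS_AE_ab: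
  assumes g: "derivator g a b"
  shows "AE x in LS_measure g a b. a \<le> x \<and> x < b"
  using AE_not_in[OF LS_outside_null[OF g]] by eventually_elim auto

lemma LS_total:
  assumes g: "derivator g a b"
  shows "emeasure (LS_measure g a b) UNIV = ennreal (g b - g a)"
proof -
  have ab: "a \<le> b" using g by (auto simp: derivator_def)
  have "emeasure (LS_measure g a b) UNIV = emeasure (LS_measure g a b) {a..<b}"
    using LS_outside_null[OF g] by (intro emeasure_eq_AE) (auto intro!: AE_I[of _ _ "UNIV - {a..<b}"])
  also have "\<dots> = ennreal (g b - g a)" using LS_Ico[OF g ab] ab by (simp add: gext_def)
  finally show ?thesis .
qed

lemma LS_finite: "derivator g a b \<Longrightarrow> finite_measure (LS_measure g a b)"
  by (rule finite_measureI) (simp add: LS_total)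

lemma LS_Ico_in:
  assumes g: "derivator g a b" and "a \<le> c" "c \<le> d" "d \<le> b"
  shows "emeasure (LS_measure g a b) {c..<d} = ennreal (g d - g c)"
  using LS_Ico[OF g, of c d] assms by (simp add: gext_in)

lemma LS_measure_Ico_in:
  assumes g: "derivator g a b" and "a \<le> c" "c \<le> d" "d \<le> b"
  shows "measure (LS_measure g a b) {c..<d} = g d - g c"
proof -
  have "g c \<le> g d" using g assms by (auto simp: derivator_def mono_on_def)
  then show ?thesis using LS_Ico_in[OF assms] by (simp add: measure_def)
qed


locale drv =
  fixes g :: "real \<Rightarrow> real" and a b :: real
  assumes drv: "derivator g a b"
begin

abbreviation "M \<equiv> LS_measure g a b"

sublocale M: finite_measure M by (rule LS_finite[OF drv])

lemma ab: "a < b" using drv by (simp add: derivator_def)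

lemma gmono_g: "a \<le> x \<Longrightarrow> x \<le> y \<Longrightarrow> y \<le> b \<Longrightarrow> g x \<le> g y"
  using drv by (auto simp: derivator_def mono_on_def)

lemma AE_ab: "AE x in M. a \<le> x \<and> x < b" by (rule LS_AE_ab[OF drv])

lemma int_bdd:
  fixes h :: "real \<Rightarrow> 'f::{banach, second_countable_topology}"
  assumes "h \<in> borel_measurable borel" "\<And>x. norm (h x) \<le> B"
  shows "integrable M h"
  by (rule M.integrable_const_bound[where B=B]) (use assms in auto)

lemma set_int_bound:
  fixes h :: "real \<Rightarrow> real"
  assumes h: "h \<in> borel_measurable borel" "\<And>x. \<bar>h x\<bar> \<le> B" and S: "S \<in> sets borel"
  shows "\<bar>LINT y:S|M. h y\<bar> \<le> B * measure M UNIV"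
proof -
  have B0: "0 \<le> B" using h(2)[of 0] by linarith
  have "\<bar>LINT y:S|M. h y\<bar> = \<bar>\<integral>y. indicator S y * h y \<partial>M\<bar>" by (simp add: set_lebesgue_integral_def)
  also have "\<dots> \<le> \<integral>y. \<bar>indicator S y * h y\<bar> \<partial>M" by (rule integral_abs_bound)
  also have "\<dots> \<le> \<integral>y. B \<partial>M"
    by (rule integral_mono) (use h S B0 in \<open>auto intro!: int_bdd[where B=B] simp: indicator_def abs_mult\<close>)
  also have "\<dots> = B * measure M UNIV" by simp
  finally show ?thesis .
qed

lemma gm_meas_bdd: "gmono g a b x0 n \<in> borel_measurable borel \<and> (\<exists>B. \<forall>x. \<bar>gmono g a b x0 n x\<bar> \<le> B)"
proof (induction n)
  case 0
  then show ?case by (auto intro!: exI[of _ 1])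
next
  case (Suc n)
  define h where "h = gmono g a b x0 n"
  obtain B where hm[measurable]: "h \<in> borel_measurable borel" and hB: "\<And>x. \<bar>h x\<bar> \<le> B"
    using Suc unfolding h_def by blast
  have hint: "integrable M h" using int_bdd[of h B] hm hB by simp
  have sint: "set_integrable M S h" if "S \<in> sets borel" for S
    unfolding set_integrable_def using that hint by (intro integrable_mult_indicator) auto
  define I where "I x = (LINT y:{..<x}|M. h y)" for x
  have eq: "gmono g a b x0 (Suc n) x = real (Suc n) * (I x - I x0)" for x
  proof (cases "x0 \<le> x")
    case True
    have U: "{..<x} = {..<x0} \<union> {x0..<x}" using True by auto
    have d: "{..<x0} \<inter> {x0..<x} = {}" by auto
    have "I x = I x0 + (LINT y:{x0..<x}|M. h y)" unfolding I_def
      using set_integral_Un[OF d sint sint] U by simp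
    then show ?thesis using True by (simp add: h_def)
  next
    case False
    have U: "{..<x0} = {..<x} \<union> {x..<x0}" using False by auto
    have d: "{..<x} \<inter> {x..<x0} = {}" by auto
    have "I x0 = I x + (LINT y:{x..<x0}|M. h y)" unfolding I_def
      using set_integral_Un[OF d sint sint] U by simp
    then show ?thesis using False by (simp add: h_def algebra_simps)
  qed
  have "(\<lambda>p::real\<times>real. (if snd p < fst p then 1 else 0) * h (snd p)) \<in> borel_measurable (borel \<Otimes>\<^sub>M borel)"
    by measurable
  then have "(\<lambda>p::real\<times>real. (if snd p < fst p then 1 else 0) * h (snd p)) \<in> borel_measurable (borel \<Otimes>\<^sub>M M)"
    by (subst measurable_cong_sets[OF sets_pair_measure_cong[OF refl sets_LS] refl])
  then have "case_prod (\<lambda>x y. indicator {..<x} y *\<^sub>R h y) \<in> borel_measurable (borel \<Otimes>\<^sub>M M)"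
    by (rule measurable_cong[THEN iffD1, rotated]) (auto simp: indicator_def)
  from M.borel_measurable_lebesgue_integral[OF this]
  have "I \<in> borel_measurable borel"
    unfolding I_def set_lebesgue_integral_def .
  then have m: "gmono g a b x0 (Suc n) \<in> borel_measurable borel"
    unfolding eq[abs_def] by measurable
  have "\<bar>gmono g a b x0 (Suc n) x\<bar> \<le> real (Suc n) * (B * measure M UNIV)" for x
    using set_int_bound[OF hm hB, of "{x0..<x}"] set_int_bound[OF hm hB, of "{x..<x0}"]
    by (auto simp: h_def abs_mult add.commute intro!: mult_left_mono)
  then show ?case using m by blast
qed

end

context drv begin

lemma gm_meas[measurable]: "gmono g a b x0 n \<in> borel_measurable borel"
  using gm_meas_bdd by blast

lemma gm_bdd: obtains B where "\<And>x. \<bar>gmono g a b x0 n x\<bar> \<le> B"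
  using gm_meas_bdd[of x0 n] by blast

lemma gm_int: "integrable M (gmono g a b x0 n)"
proof -
  obtain B where "\<And>x. \<bar>gmono g a b x0 n x\<bar> \<le> B" using gm_bdd[of x0 n] by blast
  then show ?thesis by (intro int_bdd[of _ B]) auto
qed

lemma gm_sint: "S \<in> sets borel \<Longrightarrow> set_integrable M S (gmono g a b x0 n)"
  unfolding set_integrable_def using gm_int by (intro integrable_mult_indicator) auto

lemma gm_Suc_I: "gmono g a b x0 (Suc n) x = real (Suc n) *
   ((LINT y:{..<x}|M. gmono g a b x0 n y) - (LINT y:{..<x0}|M. gmono g a b x0 n y))"
proof (cases "x0 \<le> x")
  case True
  have U: "{..<x} = {..<x0} \<union> {x0..<x}" using True by auto
  have d: "{..<x0} \<inter> {x0..<x} = {}" by auto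
  show ?thesis using set_integral_Un[OF d gm_sint gm_sint] U True by simp
next
  case False
  have U: "{..<x0} = {..<x} \<union> {x..<x0}" using False by auto
  have d: "{..<x} \<inter> {x..<x0} = {}" by auto
  show ?thesis using set_integral_Un[OF d gm_sint gm_sint] U False by (simp add: algebra_simps)
qed

lemma gm_prim:
  assumes "a \<le> x"
  shows "(LINT y:{a..<x}|M. gmono g a b x0 n y) =
     (gmono g a b x0 (Suc n) x - gmono g a b x0 (Suc n) a) / real (Suc n)"
proof -
  have U: "{..<x} = {..<a} \<union> {a..<x}" using assms by auto
  have d: "{..<a} \<inter> {a..<x} = {}" by auto
  have "(LINT y:{..<x}|M. gmono g a b x0 n y) = (LINT y:{..<a}|M. gmono g a b x0 n y) + (LINT y:{a..<x}|M. gmono g a b x0 n y)"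
    using set_integral_Un[OF d gm_sint gm_sint] U by simp
  then show ?thesis unfolding gm_Suc_I by (simp add: field_simps)
qed

end

lemma gpolys_mono:
  "x0 \<in> {a..b} \<Longrightarrow> (\<lambda>x. c * of_real (gmono g a b x0 n x)) \<in> gpolys g a b"
  unfolding gpolys_def
  by (rule CollectI, rule exI[of _ "{(x0, n)}"], rule exI[of _ "\<lambda>_. c"]) auto

lemma gpolys_const:
  "a \<le> b \<Longrightarrow> (\<lambda>x. c) \<in> gpolys g a b"
  using gpolys_mono[of a a b c g 0] by simp

lemma sum_if_Un: "finite A \<Longrightarrow> finite B \<Longrightarrow> (\<Sum>s\<in>A\<union>B. if s \<in> A then f s else 0) = sum f A"
proof -
  assume "finite A" "finite B"
  moreover have "(A \<union> B) \<inter> A = A" by blast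
  ultimately show ?thesis using sum.inter_restrict[of "A \<union> B" f A] by simp
qed

lemma sum_if_Un2: "finite A \<Longrightarrow> finite B \<Longrightarrow> (\<Sum>s\<in>A\<union>B. if s \<in> B then f s else 0) = sum f B"
  using sum_if_Un[of B A f] by (simp add: Un_commute)

lemma gpolys_add:
  assumes "p \<in> gpolys g a b" "q \<in> gpolys g a b"
  shows "(\<lambda>x. p x + q x) \<in> gpolys g a b"
proof -
  obtain S1 c1 where 1: "finite S1" "S1 \<subseteq> {a..b} \<times> UNIV" "p = (\<lambda>x. \<Sum>(x0, n)\<in>S1. c1 (x0, n) * of_real (gmono g a b x0 n x))"
    using assms(1) unfolding gpolys_def by blast
  obtain S2 c2 where 2: "finite S2" "S2 \<subseteq> {a..b} \<times> UNIV" "q = (\<lambda>x. \<Sum>(x0, n)\<in>S2. c2 (x0, n) * of_real (gmono g a b x0 n x))"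
    using assms(2) unfolding gpolys_def by blast
  define c where "c s = (if s \<in> S1 then c1 s else 0) + (if s \<in> S2 then c2 s else 0)" for s
  have "(\<Sum>s\<in>S1 \<union> S2. c s * of_real (gmono g a b (fst s) (snd s) x)) =
      (\<Sum>s\<in>S1 \<union> S2. (if s \<in> S1 then c1 s * of_real (gmono g a b (fst s) (snd s) x) else 0)) +
      (\<Sum>s\<in>S1 \<union> S2. (if s \<in> S2 then c2 s * of_real (gmono g a b (fst s) (snd s) x) else 0))" for x
    unfolding sum.distrib[symmetric] by (rule sum.cong) (auto simp: c_def distrib_right)
  also have "\<dots> x = p x + q x" for x
  proof -
    have i: "(S1 \<union> S2) \<inter> S1 = S1" "(S1 \<union> S2) \<inter> S2 = S2" by auto
    show ?thesis using 1 2 by (simp add: sum_if_Un sum_if_Un2 split_def)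
  qed
  finally show ?thesis unfolding gpolys_def using 1 2
    by (intro CollectI exI[of _ "S1 \<union> S2"] exI[of _ c]) (auto simp: split_def)
qed

lemma gpolys_sum:
  assumes "finite T" "a \<le> b" "\<And>t. t \<in> T \<Longrightarrow> f t \<in> gpolys g a b"
  shows "(\<lambda>x. \<Sum>t\<in>T. f t x) \<in> gpolys g a b"
  using assms
proof (induction T rule: finite_induct)
  case empty
  then show ?case using gpolys_const[of a b 0] by simp
next
  case (insert t T)
  then show ?case using gpolys_add[of "f t" g a b "\<lambda>x. \<Sum>t\<in>T. f t x"] by simp
qed

context drv begin

lemma gpoly_meas_bdd:
  assumes "p \<in> gpolys g a b"
  shows "p \<in> borel_measurable borel" "\<exists>B. \<forall>x. norm (p x :: 'f::{real_normed_field,second_countable_topology}) \<le> B"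
proof -
  obtain S c where 1: "finite S" "S \<subseteq> {a..b} \<times> UNIV" "p = (\<lambda>x. \<Sum>(x0, n)\<in>S. c (x0, n) * of_real (gmono g a b x0 n x))"
    using assms unfolding gpolys_def by blast
  show "p \<in> borel_measurable borel" unfolding 1(3) split_def by measurable
  have "\<forall>s. \<exists>B. \<forall>x. \<bar>gmono g a b (fst s) (snd s) x\<bar> \<le> B" using gm_bdd by metis
  then obtain B where B: "\<And>s x. \<bar>gmono g a b (fst s) (snd s) x\<bar> \<le> B s" by metis
  have "norm (p x) \<le> (\<Sum>s\<in>S. norm (c s) * B s)" for x
  proof -
    have "norm (p x) \<le> (\<Sum>s\<in>S. norm (c s * of_real (gmono g a b (fst s) (snd s) x)))"
      unfolding 1(3) split_def prod.collapse by (rule norm_sum)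
    also have "\<dots> \<le> (\<Sum>s\<in>S. norm (c s) * B s)"
      by (intro sum_mono) (auto simp: norm_mult intro!: mult_left_mono B)
    finally show ?thesis .
  qed
  then show "\<exists>B. \<forall>x. norm (p x) \<le> B" by blast
qed

lemma gpoly_prim:
  fixes p :: "real \<Rightarrow> 'f::{real_normed_field, banach, second_countable_topology}"
  assumes "p \<in> gpolys g a b"
  shows "\<exists>q\<in>gpolys g a b. \<forall>x\<in>{a..b}. q x = k + (\<integral>y. indicator {a..<x} y *\<^sub>R p y \<partial>M)"
proof -
  obtain S c where 1: "finite S" "S \<subseteq> {a..b} \<times> UNIV" "p = (\<lambda>x. \<Sum>(x0, n)\<in>S. c (x0, n) * of_real (gmono g a b x0 n x))"
    using assms unfolding gpolys_def by blast
  define K where "K = k - (\<Sum>s\<in>S. c s / of_nat (Suc (snd s)) * of_real (gmono g a b (fst s) (Suc (snd s)) a))"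
  define q where "q x = K + (\<Sum>s\<in>S. c s / of_nat (Suc (snd s)) * of_real (gmono g a b (fst s) (Suc (snd s)) x))" for x
  have "q \<in> gpolys g a b"
    unfolding q_def using 1 ab
    by (intro gpolys_add gpolys_const gpolys_sum gpolys_mono) auto
  moreover have "q x = k + (\<integral>y. indicator {a..<x} y *\<^sub>R p y \<partial>M)" if x: "x \<in> {a..b}" for x
  proof -
    have "(\<integral>y. indicator {a..<x} y *\<^sub>R p y \<partial>M) =
        (\<integral>y. (\<Sum>s\<in>S. c s * of_real (indicator {a..<x} y *\<^sub>R gmono g a b (fst s) (snd s) y)) \<partial>M)"
      unfolding 1(3) split_def by (simp add: scaleR_sum_right indicator_def scaleR_conv_of_real mult.left_commute sum_distrib_left)
    also have "\<dots> = (\<Sum>s\<in>S. c s * of_real (LINT y:{a..<x}|M. gmono g a b (fst s) (snd s) y))"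
    proof (subst Bochner_Integration.integral_sum)
      show "integrable M (\<lambda>y. c s * of_real (indicator {a..<x} y *\<^sub>R gmono g a b (fst s) (snd s) y))" for s
        using gm_sint[of "{a..<x}" "fst s" "snd s"] unfolding set_integrable_def
        by (intro integrable_mult_right integrable_of_real) auto
      show "(\<Sum>s\<in>S. \<integral>y. c s * of_real (indicator {a..<x} y *\<^sub>R gmono g a b (fst s) (snd s) y) \<partial>M) = 
          (\<Sum>s\<in>S. c s * of_real (LINT y:{a..<x}|M. gmono g a b (fst s) (snd s) y))"
        unfolding set_lebesgue_integral_def
      proof (intro sum.cong refl)
        fix s assume "s \<in> S"
        have i: "integrable M (\<lambda>y. indicator {a..<x} y *\<^sub>R gmono g a b (fst s) (snd s) y)"
          using gm_sint[of "{a..<x}" "fst s" "snd s"] unfolding set_integrable_def by simp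
        show "(\<integral>y. c s * of_real (indicator {a..<x} y *\<^sub>R gmono g a b (fst s) (snd s) y) \<partial>M) =
            c s * of_real (\<integral>y. indicator {a..<x} y *\<^sub>R gmono g a b (fst s) (snd s) y \<partial>M)"
        proof -
          have "(\<integral>y. (of_real (indicator {a..<x} y *\<^sub>R gmono g a b (fst s) (snd s) y) :: 'f) \<partial>M) =
            of_real (\<integral>y. indicator {a..<x} y *\<^sub>R gmono g a b (fst s) (snd s) y \<partial>M)"
            by (rule integral_bounded_linear[OF bounded_linear_of_real i])
          then show ?thesis by (simp only: integral_mult_right_zero)
        qed
      qed
    qed
    also have "\<dots> = (\<Sum>s\<in>S. c s * of_real ((gmono g a b (fst s) (Suc (snd s)) x - gmono g a b (fst s) (Suc (snd s)) a) / real (Suc (snd s))))"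
      using x by (simp add: gm_prim)
    also have "\<dots> = (\<Sum>s\<in>S. c s / of_nat (Suc (snd s)) * of_real (gmono g a b (fst s) (Suc (snd s)) x)) -
         (\<Sum>s\<in>S. c s / of_nat (Suc (snd s)) * of_real (gmono g a b (fst s) (Suc (snd s)) a))"
      by (simp add: sum_subtractf[symmetric] of_real_diff of_real_divide field_simps del: of_nat_Suc)
    finally show ?thesis by (simp add: q_def K_def)
  qed
  ultimately show ?thesis by blast
qed

end

context drv begin

definition sp :: "real \<Rightarrow> nat \<Rightarrow> real" where
  "sp \<eta> k = Sup {x \<in> {a..b}. g x \<le> g a + real k * \<eta>}"

lemma sp_set: "a \<in> {x \<in> {a..b}. g x \<le> g a + real k * \<eta>}" "bdd_above {x \<in> {a..b}. g x \<le> g a + real k * \<eta>}"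
  if "\<eta> \<ge> 0" using ab that by auto

lemma sp_in: assumes "\<eta> \<ge> 0" shows "a \<le> sp \<eta> k" "sp \<eta> k \<le> b"
proof -
  show "a \<le> sp \<eta> k" unfolding sp_def by (rule cSup_upper[OF sp_set[OF assms]])
  show "sp \<eta> k \<le> b" unfolding sp_def using sp_set(1)[OF assms, of k] by (intro cSup_least) auto
qed

lemma sp_above: assumes "\<eta> \<ge> 0" "x \<in> {a..b}" "sp \<eta> k < x" shows "g a + real k * \<eta> < g x"
proof (rule ccontr)
  define S where "S = {x \<in> {a..b}. g x \<le> g a + real k * \<eta>}"
  have bd: "bdd_above S" using sp_set[OF assms(1), of k] unfolding S_def by blast
  assume "\<not> ?thesis"
  then have "x \<in> S" using assms unfolding S_def by auto
  then have "x \<le> Sup S" using bd by (rule cSup_upper)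
  then show False using assms(3) unfolding sp_def S_def by simp
qed

lemma sp_below: assumes "\<eta> \<ge> 0" "x \<in> {a..b}" "x < sp \<eta> k" shows "g x \<le> g a + real k * \<eta>"
proof -
  define S where "S = {x \<in> {a..b}. g x \<le> g a + real k * \<eta>}"
  have ne: "S \<noteq> {}" and bd: "bdd_above S" using sp_set[OF assms(1), of k] unfolding S_def by blast+
  have "x < Sup S" using assms(3) unfolding sp_def S_def .
  then obtain y where y: "y \<in> S" "x < y" using less_cSup_iff[OF ne bd] by blast
  then have "g x \<le> g y" using assms unfolding S_def by (intro gmono_g) auto
  then show ?thesis using y unfolding S_def by auto
qed

lemma sp_g: assumes "\<eta> \<ge> 0" shows "g (sp \<eta> k) \<le> g a + real k * \<eta>"
proof (cases "sp \<eta> k = a")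
  case True
  then show ?thesis using assms by simp
next
  case False
  then have s: "a < sp \<eta> k" "sp \<eta> k \<le> b" using sp_in[OF assms, of k] by auto
  have "(g \<longlongrightarrow> g (sp \<eta> k)) (at_left (sp \<eta> k))"
    using drv s unfolding derivator_def continuous_within by auto
  moreover have "\<forall>\<^sub>F x in at_left (sp \<eta> k). g x \<le> g a + real k * \<eta>"
    unfolding eventually_at_left_field using s
    by (intro exI[of _ a]) (auto intro!: sp_below[OF assms])
  ultimately show ?thesis by (rule tendsto_upperbound) simp
qed

lemma sp_mono: assumes "\<eta> \<ge> 0" shows "sp \<eta> k \<le> sp \<eta> (Suc k)"
proof -
  define S where "S = {x \<in> {a..b}. g x \<le> g a + real k * \<eta>}"
  define T where "T = {x \<in> {a..b}. g x \<le> g a + real (Suc k) * \<eta>}"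
  have ne: "S \<noteq> {}" using sp_set[OF assms(1), of k] unfolding S_def by blast
  have bd: "bdd_above T" using sp_set[OF assms(1), of "Suc k"] unfolding T_def by blast
  have "real k * \<eta> \<le> real (Suc k) * \<eta>" using assms by (intro mult_right_mono) auto
  then have "S \<subseteq> T" unfolding S_def T_def by auto
  then have "Sup S \<le> Sup T" by (rule cSup_subset_mono[OF ne bd])
  then show ?thesis unfolding sp_def S_def T_def .
qed

lemma sp_end: assumes "\<eta> \<ge> 0" "g b \<le> g a + real k * \<eta>" shows "sp \<eta> k = b"
proof -
  define S where "S = {x \<in> {a..b}. g x \<le> g a + real k * \<eta>}"
  have bd: "bdd_above S" using sp_set[OF assms(1), of k] unfolding S_def by blast
  have "b \<in> S" using assms ab unfolding S_def by auto
  then have "b \<le> Sup S" using bd by (rule cSup_upper)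
  then have "b \<le> sp \<eta> k" unfolding sp_def S_def .
  then show ?thesis using sp_in[OF assms(1), of k] by linarith
qed

lemma sp_zero: assumes "\<eta> \<ge> 0" "x \<in> {a..sp \<eta> 0}" shows "g x = g a"
proof -
  have "g x \<le> g (sp \<eta> 0)" using assms sp_in[OF assms(1)] by (intro gmono_g) auto
  also have "\<dots> \<le> g a" using sp_g[OF assms(1), of 0] by simp
  moreover have "g a \<le> g x" using assms sp_in[OF assms(1), of 0] by (intro gmono_g) auto
  ultimately show ?thesis by simp
qed

lemma sp_cover: assumes "\<eta> > 0" obtains K where "sp \<eta> K = b"
proof -
  obtain K :: nat where "(g b - g a) / \<eta> < K" using reals_Archimedean2 by blast
  then have "g b \<le> g a + real K * \<eta>" using assms by (simp add: field_simps)
  then show ?thesis using sp_end[of \<eta> K] assms that by auto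
qed

lemma UCg_eq:
  assumes "UCg g a b f" "x \<in> {a..b}" "y \<in> {a..b}" "g x = g y"
  shows "f x = f y"
proof -
  have "norm (f x - f y) < e" if e: "e > 0" for e
  proof -
    obtain d where "d > 0" "\<forall>x\<in>{a..b}. \<forall>y\<in>{a..b}. \<bar>g x - g y\<bar> < d \<longrightarrow> norm (f x - f y) < e"
      using assms(1)[unfolded UCg_def, rule_format, OF e] by blast
    then show ?thesis using assms(2-4) by simp
  qed
  from this[of "norm (f x - f y)"] have "\<not> norm (f x - f y) > 0" by auto
  then show ?thesis by simp
qed

lemma UCg_bdd:
  fixes f :: "real \<Rightarrow> 'f::real_normed_field"
  assumes "UCg g a b f"
  shows "\<exists>B. \<forall>x\<in>{a..b}. norm (f x) \<le> B"
proof -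
  obtain \<delta> where d: "\<delta> > 0" "\<And>x y. x \<in> {a..b} \<Longrightarrow> y \<in> {a..b} \<Longrightarrow> \<bar>g x - g y\<bar> < \<delta> \<Longrightarrow> norm (f x - f y) < 1"
  proof -
    have "\<exists>d>0. \<forall>x\<in>{a..b}. \<forall>y\<in>{a..b}. \<bar>g x - g y\<bar> < d \<longrightarrow> norm (f x - f y) < 1"
      using assms unfolding UCg_def by simp
    then obtain d where "d > 0" "\<forall>x\<in>{a..b}. \<forall>y\<in>{a..b}. \<bar>g x - g y\<bar> < d \<longrightarrow> norm (f x - f y) < 1" by blast
    then show ?thesis using that[of d] by simp
  qed
  define \<eta> where "\<eta> = \<delta> / 2"
  have e: "\<eta> > 0" "\<eta> \<ge> 0" "\<eta> < \<delta>" using d by (auto simp: \<eta>_def)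
  have bk: "\<exists>B. \<forall>x\<in>{a..sp \<eta> k}. norm (f x) \<le> B" for k
  proof (induction k)
    case 0
    have fa: "f x = f a" if "x \<in> {a..sp \<eta> 0}" for x
    proof -
      have "x \<in> {a..b}" using that sp_in[OF e(2), of 0] by auto
      then show ?thesis using UCg_eq[OF assms, of x a] sp_zero[OF e(2) that] ab by simp
    qed
    show ?case
    proof (intro exI ballI)
      fix x assume "x \<in> {a..sp \<eta> 0}"
      from fa[OF this] show "norm (f x) \<le> norm (f a)" by simp
    qed
  next
    case (Suc k)
    then obtain B where B: "\<forall>x\<in>{a..sp \<eta> k}. norm (f x) \<le> B" by blast
    have "norm (f x) \<le> max B (norm (f (sp \<eta> (Suc k))) + 1)" if x: "x \<in> {a..sp \<eta> (Suc k)}" for x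
    proof (cases "x \<le> sp \<eta> k")
      case True
      then have "x \<in> {a..sp \<eta> k}" using x by simp
      then have "norm (f x) \<le> B" using B by blast
      then show ?thesis by simp
    next
      case False
      have xin: "x \<in> {a..b}" using x sp_in[OF e(2), of "Suc k"] by auto
      have "g a + real k * \<eta> < g x" using sp_above[OF e(2) xin] False by simp
      moreover have "g (sp \<eta> (Suc k)) \<le> g a + real (Suc k) * \<eta>" by (rule sp_g[OF e(2)])
      moreover have "g x \<le> g (sp \<eta> (Suc k))" using x sp_in[OF e(2), of "Suc k"] by (intro gmono_g) auto
      ultimately have "g (sp \<eta> (Suc k)) - g x < \<eta>" "g x \<le> g (sp \<eta> (Suc k))"
        by (simp_all add: distrib_right)
      then have "\<bar>g x - g (sp \<eta> (Suc k))\<bar> < \<delta>" using e(3) by (simp add: abs_if)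
      then have "norm (f x - f (sp \<eta> (Suc k))) < 1"
        using d(2)[OF xin] sp_in[OF e(2), of "Suc k"] by auto
      then have "norm (f x) \<le> norm (f (sp \<eta> (Suc k))) + 1" using norm_triangle_ineq2[of "f x" "f (sp \<eta> (Suc k))"] by simp
      then show ?thesis by simp
    qed
    then show ?case by blast
  qed
  moreover obtain K where "sp \<eta> K = b" using sp_cover[OF e(1)] by blast
  then show ?thesis using bk[of K] by simp
qed

end

lemma interp_est:
  fixes fx ft fu :: "'f::real_normed_field"
  assumes "0 \<le> l" "l \<le> 1" "norm (fx - fu) \<le> e" "(1 - l) * norm (fx - ft) \<le> e"
  shows "norm (fx - ft - of_real l * (fu - ft)) \<le> 2 * e"
proof -
  have eq: "fx - ft - of_real l * (fu - ft) = of_real (1 - l) * (fx - ft) + of_real l * (fx - fu)"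
    by (simp add: algebra_simps)
  have n1: "norm (of_real (1 - l) * (fx - ft)) = (1 - l) * norm (fx - ft)"
    unfolding norm_mult norm_of_real using assms by simp
  have n2: "norm (of_real l * (fx - fu)) = l * norm (fx - fu)"
    unfolding norm_mult norm_of_real using assms by simp
  have "norm (fx - ft - of_real l * (fu - ft)) \<le> (1 - l) * norm (fx - ft) + l * norm (fx - fu)"
    unfolding eq using norm_triangle_ineq[of "of_real (1 - l) * (fx - ft)" "of_real l * (fx - fu)"] n1 n2
    by linarith
  also have "\<dots> \<le> e + 1 * e"
    using assms by (intro add_mono mult_mono) auto
  finally show ?thesis by simp
qed

context drv begin

lemma Jconst:
  fixes h :: "real \<Rightarrow> 'f::{banach, second_countable_topology}"
  assumes "\<forall>y. t \<le> y \<longrightarrow> h y = 0" "t \<le> x"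
  shows "(\<integral>y. indicator {a..<x} y *\<^sub>R h y \<partial>M) = (\<integral>y. indicator {a..<t} y *\<^sub>R h y \<partial>M)"
proof (rule Bochner_Integration.integral_cong[OF refl])
  fix y
  show "indicator {a..<x} y *\<^sub>R h y = indicator {a..<t} y *\<^sub>R h y"
    using assms by (cases "t \<le> y") (auto simp: indicator_def)
qed

lemma Jadd:
  fixes h :: "real \<Rightarrow> 'f::{banach, second_countable_topology}"
  assumes hm: "h \<in> borel_measurable borel" and hB: "\<And>y. norm (h y) \<le> B"
  shows "(\<integral>y. indicator {a..<x} y *\<^sub>R (h y + indicator {t..<u} y *\<^sub>R C) \<partial>M) =
     (\<integral>y. indicator {a..<x} y *\<^sub>R h y \<partial>M) + measure M ({a..<x} \<inter> {t..<u}) *\<^sub>R C"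
proof -
  have i1: "integrable M (\<lambda>y. indicator {a..<x} y *\<^sub>R h y)"
    using int_bdd[OF hm hB] by (intro integrable_mult_indicator) auto
  have i3: "integrable M (indicator ({a..<x} \<inter> {t..<u}) :: real \<Rightarrow> real)"
    by (rule int_bdd[where B=1]) (auto simp: indicator_def)
  have i2: "integrable M (\<lambda>y. indicator ({a..<x} \<inter> {t..<u}) y *\<^sub>R C)"
    using i3 by (intro integrable_scaleR_left)
  have "(\<integral>y. indicator {a..<x} y *\<^sub>R (h y + indicator {t..<u} y *\<^sub>R C) \<partial>M) =
      (\<integral>y. indicator {a..<x} y *\<^sub>R h y + indicator ({a..<x} \<inter> {t..<u}) y *\<^sub>R C \<partial>M)"
    by (intro Bochner_Integration.integral_cong) (auto simp: indicator_def)
  also have "\<dots> = (\<integral>y. indicator {a..<x} y *\<^sub>R h y \<partial>M) + (\<integral>y. indicator ({a..<x} \<inter> {t..<u}) y *\<^sub>R C \<partial>M)"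
    by (rule Bochner_Integration.integral_add[OF i1 i2])
  also have "(\<integral>y. indicator ({a..<x} \<inter> {t..<u}) y *\<^sub>R C \<partial>M) = measure M ({a..<x} \<inter> {t..<u}) *\<^sub>R C"
    using i3 by simp
  finally show ?thesis .
qed

lemma UC_prim:
  fixes f :: "real \<Rightarrow> 'f::{real_normed_field, banach, second_countable_topology}"
  assumes f: "UCg g a b f" and eps: "\<epsilon> > 0"
  shows "\<exists>h. h \<in> borel_measurable borel \<and> (\<exists>B. \<forall>y. norm (h y) \<le> B) \<and>
     (\<forall>x\<in>{a..b}. norm (f x - f a - (\<integral>y. indicator {a..<x} y *\<^sub>R h y \<partial>M)) \<le> \<epsilon>)"
proof -
  obtain Bf where Bf: "\<forall>x\<in>{a..b}. norm (f x) \<le> Bf" using UCg_bdd[OF f] by blast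
  have Bf0: "0 \<le> Bf" using Bf ab by (meson atLeastAtMost_iff less_imp_le norm_ge_zero order_refl order_trans)
  obtain \<delta> where d: "\<delta> > 0" "\<And>x y. x \<in> {a..b} \<Longrightarrow> y \<in> {a..b} \<Longrightarrow> \<bar>g x - g y\<bar> < \<delta> \<Longrightarrow> norm (f x - f y) < \<epsilon> / 2"
  proof -
    have "\<exists>d>0. \<forall>x\<in>{a..b}. \<forall>y\<in>{a..b}. \<bar>g x - g y\<bar> < d \<longrightarrow> norm (f x - f y) < \<epsilon> / 2"
    proof -
      have "\<epsilon> / 2 > 0" using eps by simp
      from f[unfolded UCg_def, rule_format, OF this] show ?thesis by blast
    qed
    then obtain d where "d > 0" "\<forall>x\<in>{a..b}. \<forall>y\<in>{a..b}. \<bar>g x - g y\<bar> < d \<longrightarrow> norm (f x - f y) < \<epsilon> / 2" by blast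
    then show ?thesis using that[of d] by simp
  qed
  define \<eta> where "\<eta> = min \<delta> (\<epsilon> * \<delta> / (4 * Bf + 1))"
  have e: "\<eta> > 0" "\<eta> \<ge> 0" "\<eta> \<le> \<delta>" "\<eta> \<le> \<epsilon> * \<delta> / (4 * Bf + 1)"
    using d eps Bf0 by (auto simp: \<eta>_def)
  define J where "J h x = (\<integral>y. indicator {a..<x} y *\<^sub>R h y \<partial>M)" for h :: "real \<Rightarrow> 'f" and x
  define Q where "Q k h \<longleftrightarrow> h \<in> borel_measurable borel \<and> (\<exists>B. \<forall>y. norm (h y) \<le> B) \<and>
      (\<forall>y. sp \<eta> k \<le> y \<longrightarrow> h y = 0) \<and> f (sp \<eta> k) - f a = J h (sp \<eta> k) \<and>
      (\<forall>x\<in>{a..sp \<eta> k}. norm (f x - f a - J h x) \<le> \<epsilon>)" for k h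
  have "\<exists>h. Q k h" for k
  proof (induction k)
    case 0
    have fa: "f x = f a" if "x \<in> {a..sp \<eta> 0}" for x
    proof -
      have "x \<in> {a..b}" using that sp_in[OF e(2), of 0] by auto
      then show ?thesis using UCg_eq[OF f, of x a] sp_zero[OF e(2) that] ab by simp
    qed
    have s0: "sp \<eta> 0 \<in> {a..sp \<eta> 0}" using sp_in[OF e(2), of 0] by auto
    have "Q 0 (\<lambda>_. 0)" unfolding Q_def J_def
    proof (intro conjI ballI allI impI)
      show "f (sp \<eta> 0) - f a = (\<integral>y. indicator {a..<sp \<eta> 0} y *\<^sub>R (0::'f) \<partial>M)"
        using fa[OF s0] by simp
      fix x assume "x \<in> {a..sp \<eta> 0}"
      from fa[OF this] show "norm (f x - f a - (\<integral>y. indicator {a..<x} y *\<^sub>R (0::'f) \<partial>M)) \<le> \<epsilon>"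
        using eps by simp
    qed auto
    then show ?case by blast
  next
    case (Suc k)
    then obtain h where Qh: "Q k h" by blast
    then have hm: "h \<in> borel_measurable borel" and hz: "\<forall>y. sp \<eta> k \<le> y \<longrightarrow> h y = 0"
      and ht: "f (sp \<eta> k) - f a = J h (sp \<eta> k)" and hx: "\<forall>x\<in>{a..sp \<eta> k}. norm (f x - f a - J h x) \<le> \<epsilon>"
      unfolding Q_def by auto
    obtain B where hB: "\<And>y. norm (h y) \<le> B" using Qh unfolding Q_def by auto
    define t where "t = sp \<eta> k"
    define u where "u = sp \<eta> (Suc k)"
    have tu: "a \<le> t" "t \<le> u" "u \<le> b" using sp_in[OF e(2)] sp_mono[OF e(2)] unfolding t_def u_def by auto
    have Jc: "J h x = J h t" if "t \<le> x" for x
      unfolding J_def using Jconst[OF hz[folded t_def] that] .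
    have gu: "g u - g x < \<eta>" if "x \<in> {a..b}" "t < x" for x
    proof -
      have "g a + real k * \<eta> < g x" using sp_above[OF e(2) that(1)] that(2) unfolding t_def by simp
      moreover have "g u \<le> g a + real (Suc k) * \<eta>" unfolding u_def by (rule sp_g[OF e(2)])
      ultimately show ?thesis by (simp add: distrib_right)
    qed
    have gmid: "g t \<le> g x" "g x \<le> g u" if "x \<in> {t..u}" for x
      using that tu by (auto intro!: gmono_g)
    show ?case
    proof (cases "g u - g t = 0")
      case True
      have fx: "f x = f t" if "x \<in> {t..u}" for x
        using UCg_eq[OF f, of x t] gmid[OF that] True that tu by auto
      have "Q (Suc k) h" unfolding Q_def
      proof (intro conjI ballI allI impI)
        show "h \<in> borel_measurable borel" by (rule hm)
        show "\<exists>B. \<forall>y. norm (h y) \<le> B" using hB by blast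
        show "h y = 0" if "sp \<eta> (Suc k) \<le> y" for y using hz that tu unfolding t_def u_def by auto
        show "f (sp \<eta> (Suc k)) - f a = J h (sp \<eta> (Suc k))"
          using fx[of u] Jc[of u] ht tu unfolding t_def[symmetric] u_def[symmetric] by auto
        fix x assume x: "x \<in> {a..sp \<eta> (Suc k)}"
        show "norm (f x - f a - J h x) \<le> \<epsilon>"
        proof (cases "x \<le> t")
          case True
          then show ?thesis using hx x unfolding t_def by auto
        next
          case False
          then have xt: "x \<in> {t..u}" using x unfolding u_def by auto
          have "f x - f a - J h x = 0" using fx[OF xt] Jc[of x] xt ht unfolding t_def[symmetric] by simp
          then show ?thesis using eps by simp
        qed
      qed
      then show ?thesis by blast
    next
      case False
      define \<mu> where "\<mu> = g u - g t"
      have mu: "\<mu> > 0" using False gmid[of u] tu unfolding \<mu>_def by auto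
      define C where "C = (f u - f t) / of_real \<mu>"
      define h' where "h' y = h y + indicator {t..<u} y *\<^sub>R C" for y
      have Jh': "J h' x = J h x + measure M ({a..<x} \<inter> {t..<u}) *\<^sub>R C" for x
        unfolding J_def h'_def by (rule Jadd[OF hm hB])
      have "Q (Suc k) h'" unfolding Q_def
      proof (intro conjI ballI allI impI)
        show "h' \<in> borel_measurable borel" unfolding h'_def using hm by measurable
        have "norm (h' y) \<le> B + norm C" for y
        proof -
          have "norm (indicator {t..<u} y *\<^sub>R C) \<le> norm C" by (simp add: indicator_def)
          then show ?thesis
            unfolding h'_def using hB[of y] norm_triangle_ineq[of "h y" "indicator {t..<u} y *\<^sub>R C"] by linarith
        qed
        then show "\<exists>B. \<forall>y. norm (h' y) \<le> B" by blast
        show "h' y = 0" if "sp \<eta> (Suc k) \<le> y" for y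
          using hz that tu unfolding t_def u_def h'_def by (auto simp: indicator_def)
        have key: "f x - f a - J h' x = f x - f t - of_real ((g x - g t) / \<mu>) * (f u - f t)"
          if "x \<in> {t..u}" for x
        proof -
          have "{a..<x} \<inter> {t..<u} = {t..<x}" using that tu by auto
          then have "measure M ({a..<x} \<inter> {t..<u}) = g x - g t"
            using LS_measure_Ico_in[OF drv, of t x] that tu by auto
          then have m: "measure M ({a..<x} \<inter> {t..<u}) = g x - g t" .
          have tx: "t \<le> x" using that by simp
          have "J h' x = J h x + measure M ({a..<x} \<inter> {t..<u}) *\<^sub>R C" by (rule Jh')
          also have "\<dots> = J h t + (g x - g t) *\<^sub>R C" by (simp only: Jc[OF tx] m)
          also have "(g x - g t) *\<^sub>R C = of_real ((g x - g t) / \<mu>) * (f u - f t)"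
            unfolding C_def scaleR_conv_of_real of_real_divide by (simp add: divide_inverse mult_ac)
          finally have "J h' x = J h t + of_real ((g x - g t) / \<mu>) * (f u - f t)" .
          then show ?thesis using ht unfolding t_def[symmetric] by (simp add: algebra_simps)
        qed
        show "f (sp \<eta> (Suc k)) - f a = J h' (sp \<eta> (Suc k))"
          using key[of u] tu mu unfolding u_def[symmetric] \<mu>_def by simp
        fix x assume x: "x \<in> {a..sp \<eta> (Suc k)}"
        show "norm (f x - f a - J h' x) \<le> \<epsilon>"
        proof (cases "x \<le> t")
          case True
          have E: "{a..<x} \<inter> {t..<u} = {}" using True by auto
          have "J h' x = J h x" using Jh'[of x] unfolding E by simp
          then show ?thesis using hx x True unfolding t_def by auto
        next
          case False
          then have xtu: "x \<in> {t..u}" and xab: "x \<in> {a..b}" using x tu unfolding u_def by auto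
          define l where "l = (g x - g t) / \<mu>"
          have l01: "0 \<le> l" "l \<le> 1" using gmid[OF xtu] mu unfolding l_def \<mu>_def by auto
          have ab': "u \<in> {a..b}" "t \<in> {a..b}" using tu by auto
          have A: "norm (f x - f u) \<le> \<epsilon> / 2"
          proof -
            have "\<bar>g x - g u\<bar> < \<delta>" using gu[OF xab] False gmid[OF xtu] e(3) by auto
            then show ?thesis using d(2)[OF xab ab'(1)] by simp
          qed
          have B: "(1 - l) * norm (f x - f t) \<le> \<epsilon> / 2"
          proof (cases "\<mu> < \<delta>")
            case True
            have "\<bar>g x - g t\<bar> < \<delta>" using gmid[OF xtu] True unfolding \<mu>_def by auto
            then have "norm (f x - f t) < \<epsilon> / 2" using d(2)[OF xab ab'(2)] by simp
            moreover have "(1 - l) * norm (f x - f t) \<le> 1 * norm (f x - f t)"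
              using l01 by (intro mult_right_mono) auto
            ultimately show ?thesis by simp
          next
            case False
            have "1 - l = (g u - g x) / \<mu>" unfolding l_def \<mu>_def using mu unfolding \<mu>_def by (simp add: field_simps)
            also have "\<dots> \<le> \<eta> / \<delta>"
              using gu[OF xab] \<open>\<not> x \<le> t\<close> False mu d(1) gmid[OF xtu] by (intro frac_le) auto
            finally have l1: "1 - l \<le> \<eta> / \<delta>" .
            have nf: "norm (f x - f t) \<le> 2 * Bf"
              using Bf[rule_format, OF xab] Bf[rule_format, OF ab'(2)] norm_triangle_ineq4[of "f x" "f t"] by linarith
            have "(1 - l) * norm (f x - f t) \<le> (\<eta> / \<delta>) * (2 * Bf)"
              using l1 nf l01 by (intro mult_mono) auto
            also have "\<dots> \<le> (\<epsilon> / (4 * Bf + 1)) * (2 * Bf)"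
              using e(4) d(1) Bf0 by (intro mult_right_mono) (auto simp: field_simps)
            also have "\<dots> \<le> \<epsilon> / 2"
              using eps Bf0 by (simp add: field_simps)
            finally show ?thesis .
          qed
          have "norm (f x - f t - of_real l * (f u - f t)) \<le> 2 * (\<epsilon> / 2)"
            by (rule interp_est[OF l01 A B])
          moreover have "f x - f a - J h' x = f x - f t - of_real l * (f u - f t)"
            using key[OF xtu] unfolding l_def .
          ultimately show ?thesis by (metis mult_2 field_sum_of_halves)
        qed
      qed
      then show ?thesis by blast
    qed
  qed
  moreover obtain K where K: "sp \<eta> K = b" using sp_cover[OF e(1)] by blast
  ultimately obtain h where "Q K h" by blast
  then show ?thesis unfolding Q_def J_def K by blast
qed

end

context drv begin

lemma meas_M: "h \<in> borel_measurable borel \<Longrightarrow> h \<in> borel_measurable M"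
  by (simp add: measurable_cong_sets[OF sets_LS refl])

lemma bdd_inL2:
  fixes h :: "real \<Rightarrow> 'f::{real_normed_field, banach, second_countable_topology}"
  assumes hm: "h \<in> borel_measurable borel" and hB: "\<And>y. norm (h y) \<le> B"
  shows "in_L2g g a b h"
proof -
  have "(\<integral>\<^sup>+ x \<in> {a..<b}. ennreal ((norm (h x))\<^sup>2) \<partial>M) \<le> (\<integral>\<^sup>+ x. ennreal (B\<^sup>2) \<partial>M)"
  proof (intro nn_integral_mono)
    fix x
    have "(norm (h x))\<^sup>2 \<le> B\<^sup>2" using hB[of x] by (intro power_mono) auto
    then show "ennreal ((norm (h x))\<^sup>2) * indicator {a..<b} x \<le> ennreal (B\<^sup>2)"
      by (auto simp: indicator_def)
  qed
  also have "\<dots> < \<infinity>" using M.emeasure_finite[of UNIV] by (simp add: ennreal_mult_eq_top_iff less_top[symmetric])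
  finally show ?thesis unfolding in_L2g_def using meas_M[OF hm]
    by (auto intro: measurable_completion)
qed

lemma int_abs_le:
  fixes v :: "real \<Rightarrow> 'f::{real_normed_field, banach, second_countable_topology}"
  assumes vm: "v \<in> borel_measurable borel" and vB: "\<And>y. norm (v y) \<le> B" and x: "x \<le> b"
  shows "norm (\<integral>y. indicator {a..<x} y *\<^sub>R v y \<partial>M) \<le> (\<integral>y. indicator {a..<b} y * norm (v y) \<partial>M)"
proof -
  have B0: "0 \<le> B" using vB[of 0] norm_ge_zero order_trans by blast
  have "norm (\<integral>y. indicator {a..<x} y *\<^sub>R v y \<partial>M) \<le> (\<integral>y. norm (indicator {a..<x} y *\<^sub>R v y) \<partial>M)"
    by (rule integral_norm_bound)
  also have "\<dots> \<le> (\<integral>y. indicator {a..<b} y * norm (v y) \<partial>M)"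
  proof (rule integral_mono)
    show "integrable M (\<lambda>y. norm (indicator {a..<x} y *\<^sub>R v y))"
      by (rule int_bdd[where B=B]) (use vm vB B0 in \<open>auto simp: indicator_def\<close>)
    show "integrable M (\<lambda>y. indicator {a..<b} y * norm (v y))"
      by (rule int_bdd[where B=B]) (use vm vB B0 in \<open>auto simp: indicator_def\<close>)
    fix y show "norm (indicator {a..<x} y *\<^sub>R v y) \<le> indicator {a..<b} y * norm (v y)"
      using x by (auto simp: indicator_def)
  qed
  finally show ?thesis .
qed

lemma L1_from_L2:
  fixes v :: "real \<Rightarrow> 'f::{real_normed_field, banach, second_countable_topology}"
  assumes vm: "v \<in> borel_measurable borel" and vB: "\<And>y. norm (v y) \<le> B" and "\<eta> > 0"
    and L2: "(\<integral>\<^sup>+ x \<in> {a..<b}. ennreal ((norm (v x))\<^sup>2) \<partial>M) < ennreal e2"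
  shows "(\<integral>y. indicator {a..<b} y * norm (v y) \<partial>M) \<le> \<eta> / 2 * measure M UNIV + e2 / (2 * \<eta>)"
proof -
  have B0: "0 \<le> B" using vB[of 0] norm_ge_zero order_trans by blast
  have i2: "integrable M (\<lambda>y. indicator {a..<b} y * (norm (v y))\<^sup>2)"
    by (rule int_bdd[where B="B\<^sup>2"]) (use vm vB B0 in \<open>auto simp: indicator_def abs_le_square_iff intro!: power_mono\<close>)
  have "ennreal (\<integral>y. indicator {a..<b} y * (norm (v y))\<^sup>2 \<partial>M) = (\<integral>\<^sup>+ y. indicator {a..<b} y * (norm (v y))\<^sup>2 \<partial>M)"
    by (rule nn_integral_eq_integral[OF i2, symmetric]) auto
  also have "\<dots> = (\<integral>\<^sup>+ x \<in> {a..<b}. ennreal ((norm (v x))\<^sup>2) \<partial>M)"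
    by (intro nn_integral_cong) (auto simp: indicator_def)
  also have "\<dots> < ennreal e2" by (rule L2)
  finally have I2: "(\<integral>y. indicator {a..<b} y * (norm (v y))\<^sup>2 \<partial>M) < e2"
    by (simp add: ennreal_less_iff)
  have "(\<integral>y. indicator {a..<b} y * norm (v y) \<partial>M) \<le>
      (\<integral>y. \<eta> / 2 + indicator {a..<b} y * (norm (v y))\<^sup>2 / (2 * \<eta>) \<partial>M)"
  proof (rule integral_mono)
    show "integrable M (\<lambda>y. indicator {a..<b} y * norm (v y))"
      by (rule int_bdd[where B=B]) (use vm vB B0 in \<open>auto simp: indicator_def\<close>)
    show "integrable M (\<lambda>y. \<eta> / 2 + indicator {a..<b} y * (norm (v y))\<^sup>2 / (2 * \<eta>))"
      using i2 by auto
    fix y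
    have "0 \<le> (norm (v y) - \<eta>)\<^sup>2" by simp
    then have "norm (v y) \<le> \<eta> / 2 + (norm (v y))\<^sup>2 / (2 * \<eta>)"
      using \<open>\<eta> > 0\<close> by (simp add: field_simps power2_eq_square algebra_simps)
    then show "indicator {a..<b} y * norm (v y) \<le> \<eta> / 2 + indicator {a..<b} y * (norm (v y))\<^sup>2 / (2 * \<eta>)"
      using \<open>\<eta> > 0\<close> by (auto simp: indicator_def)
  qed
  also have "\<dots> = \<eta> / 2 * measure M UNIV + (\<integral>y. indicator {a..<b} y * (norm (v y))\<^sup>2 \<partial>M) / (2 * \<eta>)"
    using i2 by (simp add: Bochner_Integration.integral_add)
  also have "\<dots> \<le> \<eta> / 2 * measure M UNIV + e2 / (2 * \<eta>)"
    using I2 \<open>\<eta> > 0\<close> by (simp add: divide_right_mono)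
  finally show ?thesis .
qed

lemma L2_imp_UC:
  assumes dL2: "dense_L2g g a b (gpolys g a b :: (real \<Rightarrow> 'f::{real_normed_field, banach, second_countable_topology}) set)"
  shows "dense_UCg g a b (gpolys g a b :: (real \<Rightarrow> 'f) set)"
  unfolding dense_UCg_def
proof (intro allI impI)
  fix f :: "real \<Rightarrow> 'f" and e :: real
  assume f: "UCg g a b f" and e: "e > 0"
  define \<epsilon> where "\<epsilon> = e / 4"
  have eps: "\<epsilon> > 0" using e by (simp add: \<epsilon>_def)
  obtain h where hm: "h \<in> borel_measurable borel" and hB: "\<exists>B. \<forall>y. norm (h y) \<le> B"
    and hx: "\<forall>x\<in>{a..b}. norm (f x - f a - (\<integral>y. indicator {a..<x} y *\<^sub>R h y \<partial>M)) \<le> \<epsilon>"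
    using UC_prim[OF f eps] by blast
  obtain B where hB: "\<And>y. norm (h y) \<le> B" using hB by blast
  define m where "m = measure M UNIV"
  have m0: "0 \<le> m" by (simp add: m_def)
  define \<eta> where "\<eta> = \<epsilon> / (m + 1)"
  have eta: "\<eta> > 0" using eps m0 by (simp add: \<eta>_def)
  have "\<eta> / 2 * m \<le> \<epsilon> / 2"
    using eps m0 by (simp add: \<eta>_def field_simps)
  obtain p where p: "p \<in> gpolys g a b"
    and pL2: "(\<integral>\<^sup>+ x \<in> {a..<b}. ennreal ((norm (h x - p x))\<^sup>2) \<partial>M) < ennreal (\<eta> * \<epsilon>)"
    using dL2 bdd_inL2[OF hm hB] eta eps unfolding dense_L2g_def by (meson mult_pos_pos)
  obtain Bp where pm: "p \<in> borel_measurable borel" and pB: "\<And>y. norm (p y) \<le> Bp"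
    using gpoly_meas_bdd[OF p] by blast
  define v where "v y = h y - p y" for y
  have vm: "v \<in> borel_measurable borel" unfolding v_def using hm pm by measurable
  have vB: "norm (v y) \<le> B + Bp" for y unfolding v_def using hB[of y] pB[of y] norm_triangle_ineq4[of "h y" "p y"] by linarith
  have L1: "(\<integral>y. indicator {a..<b} y * norm (v y) \<partial>M) \<le> \<epsilon>"
  proof -
    have "(\<integral>y. indicator {a..<b} y * norm (v y) \<partial>M) \<le> \<eta> / 2 * m + \<eta> * \<epsilon> / (2 * \<eta>)"
      unfolding m_def by (rule L1_from_L2[OF vm vB eta]) (use pL2 in \<open>simp add: v_def\<close>)
    also have "\<eta> * \<epsilon> / (2 * \<eta>) = \<epsilon> / 2" using eta by simp
    finally show ?thesis using \<open>\<eta> / 2 * m \<le> \<epsilon> / 2\<close> by simp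
  qed
  obtain q where q: "q \<in> gpolys g a b" and qx: "\<forall>x\<in>{a..b}. q x = f a + (\<integral>y. indicator {a..<x} y *\<^sub>R p y \<partial>M)"
    using gpoly_prim[OF p, of "f a"] by blast
  have "norm (f x - q x) \<le> 2 * \<epsilon>" if x: "x \<in> {a..b}" for x
  proof -
    have ih: "integrable M (\<lambda>y. indicator {a..<x} y *\<^sub>R h y)"
      using int_bdd[OF hm hB] by (intro integrable_mult_indicator) auto
    have ip: "integrable M (\<lambda>y. indicator {a..<x} y *\<^sub>R p y)"
      using int_bdd[OF pm pB] by (intro integrable_mult_indicator) auto
    have "(\<integral>y. indicator {a..<x} y *\<^sub>R h y \<partial>M) - (\<integral>y. indicator {a..<x} y *\<^sub>R p y \<partial>M) =
        (\<integral>y. indicator {a..<x} y *\<^sub>R v y \<partial>M)"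
      unfolding v_def by (subst Bochner_Integration.integral_diff[OF ih ip, symmetric]) (simp add: scaleR_diff_right)
    moreover have "norm (\<integral>y. indicator {a..<x} y *\<^sub>R v y \<partial>M) \<le> \<epsilon>"
      using int_abs_le[OF vm vB, of x] x L1 by simp
    moreover have "f x - q x = (f x - f a - (\<integral>y. indicator {a..<x} y *\<^sub>R h y \<partial>M)) +
        ((\<integral>y. indicator {a..<x} y *\<^sub>R h y \<partial>M) - (\<integral>y. indicator {a..<x} y *\<^sub>R p y \<partial>M))"
      using qx x by simp
    ultimately have eqn: "f x - q x = (f x - f a - (\<integral>y. indicator {a..<x} y *\<^sub>R h y \<partial>M)) +
        (\<integral>y. indicator {a..<x} y *\<^sub>R v y \<partial>M)" and nv: "norm (\<integral>y. indicator {a..<x} y *\<^sub>R v y \<partial>M) \<le> \<epsilon>"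
      by simp_all
    show ?thesis
      unfolding eqn
      using hx[rule_format, OF x] nv norm_triangle_ineq[of "f x - f a - (\<integral>y. indicator {a..<x} y *\<^sub>R h y \<partial>M)"
          "(\<integral>y. indicator {a..<x} y *\<^sub>R v y \<partial>M)"]
      by linarith
  qed
  then have "(SUP x\<in>{a..b}. ereal (norm (f x - q x))) \<le> ereal (2 * \<epsilon>)"
    by (intro SUP_least) simp
  also have "\<dots> < ereal e" using e by (simp add: \<epsilon>_def)
  finally show "\<exists>p\<in>gpolys g a b. (SUP x\<in>{a..b}. ereal (norm (f x - p x))) < ereal e"
    using q by blast
qed

end

lemma UCg_const: "UCg g a b (\<lambda>x. c)"
  unfolding UCg_def by (auto intro!: exI[of _ 1])

lemma UCg_add:
  assumes "UCg g a b f" "UCg g a b h"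
  shows "UCg g a b (\<lambda>x. f x + h x)"
  unfolding UCg_def
proof (intro allI impI)
  fix e :: real assume e: "e > 0"
  then have e2: "e / 2 > 0" by simp
  obtain d1 where d1: "d1 > 0" "\<forall>x\<in>{a..b}. \<forall>y\<in>{a..b}. \<bar>g x - g y\<bar> < d1 \<longrightarrow> norm (f x - f y) < e / 2"
    using assms(1)[unfolded UCg_def, rule_format, OF e2] by blast
  obtain d2 where d2: "d2 > 0" "\<forall>x\<in>{a..b}. \<forall>y\<in>{a..b}. \<bar>g x - g y\<bar> < d2 \<longrightarrow> norm (h x - h y) < e / 2"
    using assms(2)[unfolded UCg_def, rule_format, OF e2] by blast
  show "\<exists>d>0. \<forall>x\<in>{a..b}. \<forall>y\<in>{a..b}. \<bar>g x - g y\<bar> < d \<longrightarrow> norm (f x + h x - (f y + h y)) < e"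
  proof (intro exI[of _ "min d1 d2"] conjI ballI impI)
    show "min d1 d2 > 0" using d1 d2 by simp
    fix x y assume xy: "x \<in> {a..b}" "y \<in> {a..b}" "\<bar>g x - g y\<bar> < min d1 d2"
    have "norm (f x + h x - (f y + h y)) \<le> norm (f x - f y) + norm (h x - h y)"
      using norm_triangle_ineq[of "f x - f y" "h x - h y"] by (simp add: algebra_simps)
    also have "\<dots> < e / 2 + e / 2" using d1(2) d2(2) xy by (intro add_strict_mono) auto
    finally show "norm (f x + h x - (f y + h y)) < e" by simp
  qed
qed

lemma UCg_sum:
  assumes "finite I" "\<And>i. i \<in> I \<Longrightarrow> UCg g a b (f i)"
  shows "UCg g a b (\<lambda>x. \<Sum>i\<in>I. f i x)"
  using assms
proof (induction I rule: finite_induct)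
  case empty
  then show ?case using UCg_const[of g a b 0] by simp
next
  case (insert i I)
  then show ?case using UCg_add[of g a b "f i" "\<lambda>x. \<Sum>i\<in>I. f i x"] by simp
qed

lemma UCg_lip:
  fixes u :: "real \<Rightarrow> 'f::real_normed_field" and \<phi> :: "'f \<Rightarrow> 'h::real_normed_field"
  assumes "UCg g a b u" "\<And>s t. norm (\<phi> s - \<phi> t) \<le> L * norm (s - t)" "L \<ge> 0"
  shows "UCg g a b (\<lambda>x. \<phi> (u x))"
  unfolding UCg_def
proof (intro allI impI)
  fix e :: real assume e: "e > 0"
  then have e2: "e / (L + 1) > 0" using assms(3) by simp
  obtain d where d: "d > 0" "\<forall>x\<in>{a..b}. \<forall>y\<in>{a..b}. \<bar>g x - g y\<bar> < d \<longrightarrow> norm (u x - u y) < e / (L + 1)"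
    using assms(1)[unfolded UCg_def, rule_format, OF e2] by blast
  show "\<exists>d>0. \<forall>x\<in>{a..b}. \<forall>y\<in>{a..b}. \<bar>g x - g y\<bar> < d \<longrightarrow> norm (\<phi> (u x) - \<phi> (u y)) < e"
  proof (intro exI[of _ d] conjI ballI impI)
    show "d > 0" by (rule d(1))
    fix x y assume xy: "x \<in> {a..b}" "y \<in> {a..b}" "\<bar>g x - g y\<bar> < d"
    have "norm (\<phi> (u x) - \<phi> (u y)) \<le> L * norm (u x - u y)" by (rule assms(2))
    also have "\<dots> \<le> L * (e / (L + 1))" using d(2)[rule_format, OF xy] assms(3) by (intro mult_left_mono) auto
    also have "\<dots> < e" using e assms(3) by (simp add: field_simps)
    finally show "norm (\<phi> (u x) - \<phi> (u y)) < e" .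
  qed
qed

lemma UCg_scale:
  fixes c :: "'f::real_normed_field"
  assumes "UCg g a b (u :: real \<Rightarrow> real)"
  shows "UCg g a b (\<lambda>x. c * of_real (u x))"
  by (rule UCg_lip[OF assms, where L="norm c"]) (auto simp: norm_mult right_diff_distrib[symmetric] of_real_diff[symmetric] simp del: of_real_diff)

context drv begin

lemma upclosed_le:
  assumes Esub: "\<And>x. x \<in> E \<Longrightarrow> a \<le> x \<and> x < c"
    and up: "\<And>x y. x \<in> E \<Longrightarrow> x \<le> y \<Longrightarrow> y < c \<Longrightarrow> y \<in> E"
    and mb: "\<And>x. x \<in> E \<Longrightarrow> emeasure M {x..<c} \<le> r"
  shows "emeasure M E \<le> r"
proof (cases "E = {}")
  case True
  then show ?thesis by simp
next
  case False
  have bdd: "bdd_below E" using Esub by (auto intro!: bdd_belowI[of _ a])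
  define s where "s = Inf E"
  show ?thesis
  proof (cases "s \<in> E")
    case True
    have "E = {s..<c}"
    proof
      show "E \<subseteq> {s..<c}"
      proof
        fix x assume x: "x \<in> E"
        have "s \<le> x" using cInf_lower[OF x bdd] unfolding s_def .
        then show "x \<in> {s..<c}" using Esub[OF x] by simp
      qed
      show "{s..<c} \<subseteq> E" using up[OF True] by auto
    qed
    then show ?thesis using mb[OF True] by simp
  next
    case sE: False
    have E: "E = (\<Union>n. {s + 1 / Suc n..<c})"
    proof
      show "E \<subseteq> (\<Union>n. {s + 1 / Suc n..<c})"
      proof
        fix x assume x: "x \<in> E"
        have "s \<le> x" using cInf_lower[OF x bdd] unfolding s_def .
        moreover have "s \<noteq> x" using sE x by metis
        ultimately have "0 < x - s" by simp
        then obtain n :: nat where n0: "inverse (real (Suc n)) < x - s" using reals_Archimedean by blast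
        then have n: "1 / real (Suc n) < x - s" by (simp add: inverse_eq_divide)
        have "x \<in> {s + 1 / Suc n..<c}" using n Esub[OF x] by simp
        then show "x \<in> (\<Union>n. {s + 1 / Suc n..<c})" by (rule UN_I[OF UNIV_I])
      qed
      show "(\<Union>n. {s + 1 / Suc n..<c}) \<subseteq> E"
      proof
        fix y assume "y \<in> (\<Union>n. {s + 1 / Suc n..<c})"
        then obtain n :: nat where y: "s + 1 / Suc n \<le> y" "y < c" by auto
        have "0 < 1 / real (Suc n)" by simp
        then have "s < y" using y by linarith
        then obtain x where "x \<in> E" "x < y" using cInf_less_iff[OF False bdd] unfolding s_def by blast
        then show "y \<in> E" using up[of x y] y by simp
      qed
    qed
    have inc: "incseq (\<lambda>n. {s + 1 / Suc n..<c})"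
    proof (intro monoI subsetI)
      fix m n :: nat and x assume mn: "m \<le> n" and x: "x \<in> {s + 1 / Suc m..<c}"
      have "1 / real (Suc n) \<le> 1 / real (Suc m)" using mn by (intro divide_left_mono) auto
      then show "x \<in> {s + 1 / Suc n..<c}" using x by auto
    qed
    have "emeasure M E = (SUP n. emeasure M {s + 1 / Suc n..<c})"
      unfolding E by (rule SUP_emeasure_incseq[symmetric]) (use inc in auto)
    also have "\<dots> \<le> r"
    proof (rule SUP_least)
      fix n
      show "emeasure M {s + 1 / Suc n..<c} \<le> r"
      proof (cases "s + 1 / Suc n < c")
        case True
        then have "s + 1 / Suc n \<in> {s + 1 / Suc n..<c}" by simp
        then have "s + 1 / Suc n \<in> (\<Union>n. {s + 1 / Suc n..<c})" by (rule UN_I[OF UNIV_I])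
        then have "s + 1 / Suc n \<in> E" by (subst E)
        then show ?thesis by (rule mb)
      next
        case False
        then show ?thesis by simp
      qed
    qed
    finally show ?thesis .
  qed
qed

end

lemma clip_lip: "\<bar>max 0 (min 1 p) - max 0 (min 1 q)\<bar> \<le> \<bar>p - q :: real\<bar>"
  by (simp add: max_def min_def abs_if)

context drv begin

definition approxable :: "real set \<Rightarrow> bool" where
  "approxable A \<longleftrightarrow> (\<forall>\<epsilon>>0. \<exists>u::real\<Rightarrow>real. u \<in> borel_measurable borel \<and> UCg g a b u \<and>
     (\<forall>x. 0 \<le> u x \<and> u x \<le> 1) \<and>
     (\<integral>\<^sup>+x\<in>{a..<b}. ennreal \<bar>indicator A x - u x\<bar> \<partial>M) < ennreal \<epsilon>)"

lemma G_meas[measurable]: "gext g a b \<in> borel_measurable borel"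
  by (rule borel_measurable_mono) (auto simp: mono_def intro: gext_mono[OF drv])

lemma UCg_G: "UCg g a b (gext g a b)"
  unfolding UCg_def by (auto simp: gext_in intro!: exI)

lemma approx_lessThan: "approxable {..<c}"
  unfolding approxable_def
proof (intro allI impI)
  fix \<epsilon> :: real assume eps: "\<epsilon> > 0"
  define \<eta> where "\<eta> = \<epsilon> / 2"
  have eta: "\<eta> > 0" "\<eta> < \<epsilon>" using eps by (auto simp: \<eta>_def)
  define G where "G = gext g a b"
  define \<phi> where "\<phi> s = max 0 (min 1 ((G c - s) / \<eta>))" for s
  define u where "u x = \<phi> (G x)" for x
  have um: "u \<in> borel_measurable borel" unfolding u_def \<phi>_def G_def by measurable
  have lip: "norm (\<phi> s - \<phi> t) \<le> (1 / \<eta>) * norm (s - t)" for s t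
  proof -
    have "\<bar>\<phi> s - \<phi> t\<bar> \<le> \<bar>(G c - s) / \<eta> - (G c - t) / \<eta>\<bar>"
      unfolding \<phi>_def by (rule clip_lip)
    also have "(G c - s) / \<eta> - (G c - t) / \<eta> = (t - s) / \<eta>" by (simp add: diff_divide_distrib)
    also have "\<bar>(t - s) / \<eta>\<bar> = (1 / \<eta>) * \<bar>s - t\<bar>" using eta by (simp add: abs_minus_commute)
    finally show ?thesis by simp
  qed
  have uUC: "UCg g a b u" unfolding u_def G_def
    by (rule UCg_lip[OF UCg_G lip[unfolded G_def]]) (use eta in simp)
  have u01: "\<forall>x. 0 \<le> u x \<and> u x \<le> 1" unfolding u_def \<phi>_def by auto
  define E where "E = {x. a \<le> x \<and> x < c \<and> G c - \<eta> < G x}"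
  have Em: "E \<in> sets borel" unfolding E_def G_def by measurable
  have pt: "ennreal \<bar>indicator {..<c} x - u x\<bar> * indicator {a..<b} x \<le> indicator E x" for x
  proof (cases "a \<le> x \<and> x < b")
    case False
    then have "indicator {a..<b} x = (0::ennreal)" by (simp add: indicator_def)
    then show ?thesis by simp
  next
    case ab: True
    show ?thesis
    proof (cases "x < c")
      case False
      then have "G c \<le> G x" unfolding G_def by (intro gext_mono[OF drv]) simp
      then have "u x = 0" unfolding u_def \<phi>_def using eta by (simp add: divide_nonpos_pos)
      then show ?thesis using False by (simp add: indicator_def)
    next
      case xc: True
      show ?thesis
      proof (cases "G x \<le> G c - \<eta>")
        case True
        then have "u x = 1" unfolding u_def \<phi>_def using eta by (simp add: field_simps)
        then show ?thesis using xc by (simp add: indicator_def)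
      next
        case False
        then have "x \<in> E" using ab xc unfolding E_def by auto
        moreover have "\<bar>1 - u x\<bar> \<le> 1" using u01 by auto
        ultimately show ?thesis using xc ab by (simp add: indicator_def)
      qed
    qed
  qed
  have "(\<integral>\<^sup>+x\<in>{a..<b}. ennreal \<bar>indicator {..<c} x - u x\<bar> \<partial>M) \<le> (\<integral>\<^sup>+x. indicator E x \<partial>M)"
    by (intro nn_integral_mono pt)
  also have "\<dots> = emeasure M E" using Em by simp
  also have "\<dots> \<le> ennreal \<eta>"
  proof (rule upclosed_le)
    show "a \<le> x \<and> x < c" if "x \<in> E" for x using that unfolding E_def by auto
    show "y \<in> E" if "x \<in> E" "x \<le> y" "y < c" for x y
    proof -
      have "G x \<le> G y" unfolding G_def using that(2) by (rule gext_mono[OF drv])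
      then show ?thesis using that unfolding E_def by auto
    qed
    show "emeasure M {x..<c} \<le> ennreal \<eta>" if "x \<in> E" for x
    proof -
      have "x \<le> c" using that unfolding E_def by auto
      then have "emeasure M {x..<c} = ennreal (G c - G x)" unfolding G_def by (rule LS_Ico[OF drv])
      also have "\<dots> \<le> ennreal \<eta>" using that unfolding E_def by (intro ennreal_leI) auto
      finally show ?thesis .
    qed
  qed
  also have "\<dots> < ennreal \<epsilon>" using eta by (simp add: ennreal_lessI)
  finally show "\<exists>u::real\<Rightarrow>real. u \<in> borel_measurable borel \<and> UCg g a b u \<and> (\<forall>x. 0 \<le> u x \<and> u x \<le> 1) \<and>
     (\<integral>\<^sup>+x\<in>{a..<b}. ennreal \<bar>indicator {..<c} x - u x\<bar> \<partial>M) < ennreal \<epsilon>"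
    using um uUC u01 by blast
qed

lemma approx_empty: "approxable {}"
  unfolding approxable_def
  by (intro allI impI exI[of _ "\<lambda>_. 0"]) (auto intro: UCg_const)

lemma approx_compl: "approxable A \<Longrightarrow> approxable (UNIV - A)"
  unfolding approxable_def
proof (intro allI impI)
  fix \<epsilon> :: real assume "\<forall>\<epsilon>>0. \<exists>u::real\<Rightarrow>real. u \<in> borel_measurable borel \<and> UCg g a b u \<and> (\<forall>x. 0 \<le> u x \<and> u x \<le> 1) \<and>
     (\<integral>\<^sup>+x\<in>{a..<b}. ennreal \<bar>indicator A x - u x\<bar> \<partial>M) < ennreal \<epsilon>" "\<epsilon> > 0"
  then obtain u :: "real \<Rightarrow> real" where u: "u \<in> borel_measurable borel" "UCg g a b u" "\<forall>x. 0 \<le> u x \<and> u x \<le> 1"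
    "(\<integral>\<^sup>+x\<in>{a..<b}. ennreal \<bar>indicator A x - u x\<bar> \<partial>M) < ennreal \<epsilon>" by blast
  have "UCg g a b (\<lambda>x. (\<lambda>s. 1 - s) (u x))"
    by (rule UCg_lip[OF u(2), where L=1]) (auto simp: abs_minus_commute)
  moreover have "(\<integral>\<^sup>+x\<in>{a..<b}. ennreal \<bar>indicator (UNIV - A) x - (1 - u x)\<bar> \<partial>M) =
      (\<integral>\<^sup>+x\<in>{a..<b}. ennreal \<bar>indicator A x - u x\<bar> \<partial>M)"
    by (intro nn_integral_cong) (auto simp: indicator_def abs_minus_commute)
  ultimately show "\<exists>v::real\<Rightarrow>real. v \<in> borel_measurable borel \<and> UCg g a b v \<and> (\<forall>x. 0 \<le> v x \<and> v x \<le> 1) \<and>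
     (\<integral>\<^sup>+x\<in>{a..<b}. ennreal \<bar>indicator (UNIV - A) x - v x\<bar> \<partial>M) < ennreal \<epsilon>"
    using u by (intro exI[of _ "\<lambda>x. 1 - u x"]) auto
qed

end

lemma abs_sum_diff_le: "\<bar>(\<Sum>i\<in>I. f i) - (\<Sum>i\<in>I. h i)\<bar> \<le> (\<Sum>i\<in>I. \<bar>f i - h i\<bar>)" for f h :: "'i \<Rightarrow> real"
  by (metis sum_subtractf sum_abs)

lemma union_pt:
  fixes T S d :: real
  assumes "0 \<le> T" "T \<le> 1" "0 \<le> S" "0 \<le> d"
  shows "\<bar>T + d - min 1 S\<bar> \<le> d + \<bar>T - S\<bar>"
  using assms by (simp add: min_def abs_if)

context drv begin

lemma approx_union:
  fixes A :: "nat \<Rightarrow> real set"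
  assumes disj: "disjoint_family A" and meas: "\<And>i. A i \<in> sets borel" and ap: "\<And>i. approxable (A i)"
  shows "approxable (\<Union>i. A i)"
  unfolding approxable_def
proof (intro allI impI)
  fix \<epsilon> :: real assume eps: "\<epsilon> > 0"
  define D where "D N = (\<Union>i. A i) - (\<Union>i\<in>{..<N}. A i)" for N
  have Dm: "D N \<in> sets M" for N unfolding D_def using meas by auto
  have "(\<lambda>N. emeasure M (D N)) \<longlonglongrightarrow> emeasure M (\<Inter>N. D N)"
  proof (rule Lim_emeasure_decseq)
    show "range D \<subseteq> sets M" using Dm by auto
    show "decseq D" unfolding decseq_def D_def by auto
    show "emeasure M (D i) \<noteq> \<infinity>" for i using M.emeasure_finite by (simp add: top_unique)
  qed
  moreover have "(\<Inter>N. D N) = {}" unfolding D_def by auto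
  ultimately have "(\<lambda>N. emeasure M (D N)) \<longlonglongrightarrow> 0" by simp
  moreover have "(0::ennreal) < ennreal (\<epsilon> / 4)" using eps by simp
  ultimately have "eventually (\<lambda>N. emeasure M (D N) < ennreal (\<epsilon> / 4)) sequentially"
    by (rule order_tendstoD(2))
  then obtain N where DN: "emeasure M (D N) < ennreal (\<epsilon> / 4)" by (auto simp: eventually_sequentially)
  define c where "c = \<epsilon> / (4 * (real N + 1))"
  have c: "c > 0" "real N * c \<le> \<epsilon> / 4" using eps by (auto simp: c_def field_simps)
  have "\<forall>i. \<exists>u::real\<Rightarrow>real. u \<in> borel_measurable borel \<and> UCg g a b u \<and> (\<forall>x. 0 \<le> u x \<and> u x \<le> 1) \<and>
     (\<integral>\<^sup>+x\<in>{a..<b}. ennreal \<bar>indicator (A i) x - u x\<bar> \<partial>M) < ennreal c"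
    using ap c(1) unfolding approxable_def by blast
  then obtain U :: "nat \<Rightarrow> real \<Rightarrow> real" where U: "\<And>i. U i \<in> borel_measurable borel" "\<And>i. UCg g a b (U i)"
    "\<And>i x. 0 \<le> U i x" "\<And>i x. U i x \<le> 1"
    "\<And>i. (\<integral>\<^sup>+x\<in>{a..<b}. ennreal \<bar>indicator (A i) x - U i x\<bar> \<partial>M) < ennreal c"
    by metis
  define u where "u x = min 1 (\<Sum>i<N. U i x)" for x
  have um: "u \<in> borel_measurable borel" unfolding u_def using U(1) by measurable
  have uUC: "UCg g a b u"
  proof -
    have "UCg g a b (\<lambda>x. \<Sum>i<N. U i x)" by (rule UCg_sum) (auto intro: U(2))
    then have "UCg g a b (\<lambda>x. (\<lambda>s. min 1 s) (\<Sum>i<N. U i x))"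
      by (rule UCg_lip[where L=1]) (auto simp: min_def)
    then show ?thesis unfolding u_def by simp
  qed
  have u01: "\<forall>x. 0 \<le> u x \<and> u x \<le> 1" unfolding u_def using U(3) by (auto intro: sum_nonneg)
  have pt: "ennreal \<bar>indicator (\<Union>i. A i) x - u x\<bar> * indicator {a..<b} x \<le>
      indicator (D N) x + (\<Sum>i<N. ennreal \<bar>indicator (A i) x - U i x\<bar> * indicator {a..<b} x)" for x
  proof -
    define T where "T = (\<Sum>i<N. indicator (A i) x :: real)"
    have T: "indicator (\<Union>i\<in>{..<N}. A i) x = T" unfolding T_def
      by (rule indicator_UN_disjoint) (use disj in \<open>auto simp: disjoint_family_on_def disjoint_family_on_def\<close>)
    have T01: "0 \<le> T" "T \<le> 1" using T by (auto simp: indicator_def split: if_splits)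
    have split: "indicator (\<Union>i. A i) x = T + indicator (D N) x"
      unfolding T[symmetric] D_def by (auto simp: indicator_def)
    have S0: "0 \<le> (\<Sum>i<N. U i x)" using U(3) by (auto intro: sum_nonneg)
    have "\<bar>indicator (\<Union>i. A i) x - u x\<bar> \<le> indicator (D N) x + \<bar>T - (\<Sum>i<N. U i x)\<bar>"
      unfolding split u_def by (rule union_pt[OF T01 S0]) simp
    also have "\<bar>T - (\<Sum>i<N. U i x)\<bar> \<le> (\<Sum>i<N. \<bar>indicator (A i) x - U i x\<bar>)"
      unfolding T_def by (rule abs_sum_diff_le)
    finally have r: "\<bar>indicator (\<Union>i. A i) x - u x\<bar> \<le> indicator (D N) x + (\<Sum>i<N. \<bar>indicator (A i) x - U i x\<bar>)"
      by simp
    show ?thesis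
    proof (cases "x \<in> {a..<b}")
      case False
      then show ?thesis by simp
    next
      case True
      have "ennreal \<bar>indicator (\<Union>i. A i) x - u x\<bar> \<le> ennreal (indicator (D N) x + (\<Sum>i<N. \<bar>indicator (A i) x - U i x\<bar>))"
        by (rule ennreal_leI[OF r])
      also have "\<dots> = indicator (D N) x + (\<Sum>i<N. ennreal \<bar>indicator (A i) x - U i x\<bar>)"
      proof -
        have s0: "0 \<le> (\<Sum>i<N. \<bar>indicator (A i) x - U i x\<bar>)" by (rule sum_nonneg) simp
        have "ennreal (indicator (D N) x + (\<Sum>i<N. \<bar>indicator (A i) x - U i x\<bar>)) =
            ennreal (indicator (D N) x) + ennreal (\<Sum>i<N. \<bar>indicator (A i) x - U i x\<bar>)"
          by (rule ennreal_plus) (auto simp: s0)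
        also have "ennreal (\<Sum>i<N. \<bar>indicator (A i) x - U i x\<bar>) = (\<Sum>i<N. ennreal \<bar>indicator (A i) x - U i x\<bar>)"
          by (rule sum_ennreal[symmetric]) simp
        also have "ennreal (indicator (D N) x) = indicator (D N) x" by (simp add: indicator_def)
        finally show ?thesis .
      qed
      finally show ?thesis using True by simp
    qed
  qed
  have "(\<integral>\<^sup>+x\<in>{a..<b}. ennreal \<bar>indicator (\<Union>i. A i) x - u x\<bar> \<partial>M) \<le>
      (\<integral>\<^sup>+x. indicator (D N) x + (\<Sum>i<N. ennreal \<bar>indicator (A i) x - U i x\<bar> * indicator {a..<b} x) \<partial>M)"
    by (intro nn_integral_mono pt)
  also have "\<dots> = emeasure M (D N) + (\<Sum>i<N. (\<integral>\<^sup>+x\<in>{a..<b}. ennreal \<bar>indicator (A i) x - U i x\<bar> \<partial>M))"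
  proof -
    have mi: "\<And>i. (\<lambda>x. ennreal \<bar>indicator (A i) x - U i x\<bar> * indicator {a..<b} x) \<in> borel_measurable M"
      using meas U(1) by (simp add: measurable_cong_sets[OF sets_LS refl]) measurable
    have "(\<integral>\<^sup>+x. indicator (D N) x + (\<Sum>i<N. ennreal \<bar>indicator (A i) x - U i x\<bar> * indicator {a..<b} x) \<partial>M) =
        (\<integral>\<^sup>+x. indicator (D N) x \<partial>M) + (\<integral>\<^sup>+x. (\<Sum>i<N. ennreal \<bar>indicator (A i) x - U i x\<bar> * indicator {a..<b} x) \<partial>M)"
    proof (rule nn_integral_add)
      show "(\<lambda>x. indicator (D N) x) \<in> borel_measurable M" using Dm by simp
      show "(\<lambda>x. \<Sum>i<N. ennreal \<bar>indicator (A i) x - U i x\<bar> * indicator {a..<b} x) \<in> borel_measurable M"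
        by (intro borel_measurable_sum mi)
    qed
    also have "(\<integral>\<^sup>+x. (\<Sum>i<N. ennreal \<bar>indicator (A i) x - U i x\<bar> * indicator {a..<b} x) \<partial>M) =
        (\<Sum>i<N. (\<integral>\<^sup>+x\<in>{a..<b}. ennreal \<bar>indicator (A i) x - U i x\<bar> \<partial>M))"
      by (rule nn_integral_sum) (use mi in auto)
    also have "(\<integral>\<^sup>+x. indicator (D N) x \<partial>M) = emeasure M (D N)"
      by (rule nn_integral_indicator) (use Dm in auto)
    finally show ?thesis .
  qed
  also have "\<dots> \<le> ennreal (\<epsilon> / 4) + (\<Sum>i<N. ennreal c)"
    using DN U(5) by (intro add_mono sum_mono less_imp_le) auto
  also have "(\<Sum>i<N. ennreal c) = ennreal (real N * c)"
    using c by (simp add: ennreal_of_nat_eq_real_of_nat ennreal_mult)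
  also have "ennreal (\<epsilon> / 4) + ennreal (real N * c) \<le> ennreal (\<epsilon> / 2)"
    using c eps by (simp add: ennreal_plus[symmetric] del: ennreal_plus)
  also have "\<dots> < ennreal \<epsilon>" using eps by (simp add: ennreal_lessI)
  finally show "\<exists>u::real\<Rightarrow>real. u \<in> borel_measurable borel \<and> UCg g a b u \<and> (\<forall>x. 0 \<le> u x \<and> u x \<le> 1) \<and>
     (\<integral>\<^sup>+x\<in>{a..<b}. ennreal \<bar>indicator (\<Union>i. A i) x - u x\<bar> \<partial>M) < ennreal \<epsilon>"
    using um uUC u01 by blast
qed

lemma approx_borel:
  assumes "A \<in> sets borel"
  shows "approxable A"
proof -
  have sb: "sets borel = sigma_sets UNIV (range lessThan :: real set set)"
    by (subst borel_Iio) simp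
  have "Int_stable (range lessThan :: real set set)"
    unfolding Int_stable_def
  proof (clarify)
    fix c d :: real
    show "{..<c} \<inter> {..<d} \<in> range lessThan" by (rule image_eqI[of _ _ "min c d"]) auto
  qed
  moreover have "range lessThan \<subseteq> Pow (UNIV :: real set)" by auto
  moreover have "A \<in> sigma_sets UNIV (range lessThan)" using assms sb by simp
  ultimately show ?thesis
  proof (induction rule: sigma_sets_induct_disjoint)
    case (basic A)
    then show ?case using approx_lessThan by auto
  next
    case empty
    then show ?case by (rule approx_empty)
  next
    case (compl A)
    then show ?case using approx_compl by blast
  next
    case (union A)
    have "A i \<in> sets borel" for i using union(2) sb by auto
    then show ?case using approx_union[OF union(1)] union(3) by auto
  qed
qed

lemma approx_completion:
  assumes "A \<in> sets (completion M)"
  shows "approxable A"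
proof -
  obtain S N N' where A: "A = S \<union> N" "N \<subseteq> N'" "N' \<in> null_sets M" "S \<in> sets M"
    using sets_completionE[OF assms] by metis
  have apS: "approxable S" using A(4) approx_borel by simp
  have ae: "AE x in M. indicator A x = (indicator S x :: real)"
    using AE_not_in[OF A(3)] by eventually_elim (use A(1,2) in \<open>auto simp: indicator_def\<close>)
  show ?thesis unfolding approxable_def
  proof (intro allI impI)
    fix \<epsilon> :: real assume "\<epsilon> > 0"
    then obtain u :: "real \<Rightarrow> real" where u: "u \<in> borel_measurable borel" "UCg g a b u" "\<forall>x. 0 \<le> u x \<and> u x \<le> 1"
      "(\<integral>\<^sup>+x\<in>{a..<b}. ennreal \<bar>indicator S x - u x\<bar> \<partial>M) < ennreal \<epsilon>"
      using apS unfolding approxable_def by blast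
    have "(\<integral>\<^sup>+x\<in>{a..<b}. ennreal \<bar>indicator A x - u x\<bar> \<partial>M) = (\<integral>\<^sup>+x\<in>{a..<b}. ennreal \<bar>indicator S x - u x\<bar> \<partial>M)"
      by (rule nn_integral_cong_AE) (use ae in auto)
    then show "\<exists>u::real\<Rightarrow>real. u \<in> borel_measurable borel \<and> UCg g a b u \<and> (\<forall>x. 0 \<le> u x \<and> u x \<le> 1) \<and>
     (\<integral>\<^sup>+x\<in>{a..<b}. ennreal \<bar>indicator A x - u x\<bar> \<partial>M) < ennreal \<epsilon>"
      using u by auto
  qed
qed

end

context drv begin

lemma simple_L2_approx:
  fixes f :: "real \<Rightarrow> 'f::{real_normed_field, banach, second_countable_topology}"
  assumes fm[measurable]: "f \<in> borel_measurable (completion M)"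
    and fL: "(\<integral>\<^sup>+x\<in>{a..<b}. ennreal ((norm (f x))\<^sup>2) \<partial>M) < \<infinity>" and e: "e > 0"
  shows "\<exists>s. simple_function (completion M) s \<and> (\<integral>\<^sup>+x\<in>{a..<b}. ennreal ((norm (f x - s x))\<^sup>2) \<partial>M) < ennreal e"
proof -
  obtain F where F: "\<And>i. simple_function (completion M) (F i)" "\<And>x. (\<lambda>i. F i x) \<longlonglongrightarrow> f x"
    "\<And>i x. dist (F i x) 0 \<le> 2 * dist (f x) 0"
    using borel_measurable_implies_sequence_metric[OF fm, of 0] by auto
  have Fm[measurable]: "F i \<in> borel_measurable (completion M)" for i
    by (rule borel_measurable_simple_function[OF F(1)])
  have ab_m[measurable]: "{a..<b} \<in> sets (completion M)" by simp
  have "(\<lambda>i. \<integral>\<^sup>+x. ennreal ((norm (f x - F i x))\<^sup>2) * indicator {a..<b} x \<partial>completion M) \<longlonglongrightarrow>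
      (\<integral>\<^sup>+x. 0 \<partial>completion M)"
  proof (rule nn_integral_dominated_convergence[where w="\<lambda>x. ennreal 9 * (ennreal ((norm (f x))\<^sup>2) * indicator {a..<b} x)"])
    show "(\<lambda>x. ennreal ((norm (f x - F i x))\<^sup>2) * indicator {a..<b} x) \<in> borel_measurable (completion M)" for i
      by measurable
    show "(\<lambda>x. 0::ennreal) \<in> borel_measurable (completion M)" by simp
    show "(\<lambda>x. ennreal 9 * (ennreal ((norm (f x))\<^sup>2) * indicator {a..<b} x)) \<in> borel_measurable (completion M)"
      by measurable
    show "AE x in completion M. ennreal ((norm (f x - F j x))\<^sup>2) * indicator {a..<b} x \<le>
        ennreal 9 * (ennreal ((norm (f x))\<^sup>2) * indicator {a..<b} x)" for j
    proof (intro AE_I2)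
      fix x
      have "norm (f x - F j x) \<le> norm (f x) + norm (F j x)" by (rule norm_triangle_ineq4)
      also have "\<dots> \<le> 3 * norm (f x)" using F(3)[of j x] by simp
      finally have "(norm (f x - F j x))\<^sup>2 \<le> (3 * norm (f x))\<^sup>2" by (intro power_mono) auto
      then have "ennreal ((norm (f x - F j x))\<^sup>2) \<le> ennreal (9 * (norm (f x))\<^sup>2)"
        by (intro ennreal_leI) (simp add: power_mult_distrib)
      also have "ennreal (9 * (norm (f x))\<^sup>2) = ennreal 9 * ennreal ((norm (f x))\<^sup>2)"
        by (rule ennreal_mult) auto
      finally have "ennreal ((norm (f x - F j x))\<^sup>2) \<le> ennreal 9 * ennreal ((norm (f x))\<^sup>2)" .
      then show "ennreal ((norm (f x - F j x))\<^sup>2) * indicator {a..<b} x \<le>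
        ennreal 9 * (ennreal ((norm (f x))\<^sup>2) * indicator {a..<b} x)"
        by (auto simp: indicator_def)
    qed
    have "(\<integral>\<^sup>+x. ennreal 9 * (ennreal ((norm (f x))\<^sup>2) * indicator {a..<b} x) \<partial>completion M) =
        ennreal 9 * (\<integral>\<^sup>+x. ennreal ((norm (f x))\<^sup>2) * indicator {a..<b} x \<partial>completion M)"
      by (rule nn_integral_cmult) measurable
    also have "\<dots> = ennreal 9 * (\<integral>\<^sup>+x\<in>{a..<b}. ennreal ((norm (f x))\<^sup>2) \<partial>M)"
      by (simp add: nn_integral_completion)
    also have "\<dots> < \<infinity>" using fL by (simp add: ennreal_mult_less_top)
    finally show "(\<integral>\<^sup>+x. ennreal 9 * (ennreal ((norm (f x))\<^sup>2) * indicator {a..<b} x) \<partial>completion M) < \<infinity>" .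
    show "AE x in completion M. (\<lambda>i. ennreal ((norm (f x - F i x))\<^sup>2) * indicator {a..<b} x) \<longlonglongrightarrow> 0"
    proof (intro AE_I2)
      fix x
      have "(\<lambda>i. f x - F i x) \<longlonglongrightarrow> 0" using tendsto_diff[OF tendsto_const[of "f x"] F(2)[of x]] by simp
      then have "(\<lambda>i. (norm (f x - F i x))\<^sup>2) \<longlonglongrightarrow> (norm (0::'f))\<^sup>2"
        by (intro tendsto_intros)
      then have "(\<lambda>i. (norm (f x - F i x))\<^sup>2) \<longlonglongrightarrow> 0" by simp
      then have "(\<lambda>i. ennreal ((norm (f x - F i x))\<^sup>2)) \<longlonglongrightarrow> ennreal 0"
        by (rule tendsto_ennrealI)
      then show "(\<lambda>i. ennreal ((norm (f x - F i x))\<^sup>2) * indicator {a..<b} x) \<longlonglongrightarrow> 0"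
        by (cases "x \<in> {a..<b}") auto
    qed
  qed
  then have "(\<lambda>i. \<integral>\<^sup>+x\<in>{a..<b}. ennreal ((norm (f x - F i x))\<^sup>2) \<partial>M) \<longlonglongrightarrow> 0"
    by (simp add: nn_integral_completion)
  moreover have "(0::ennreal) < ennreal e" using e by simp
  ultimately have "eventually (\<lambda>i. (\<integral>\<^sup>+x\<in>{a..<b}. ennreal ((norm (f x - F i x))\<^sup>2) \<partial>M) < ennreal e) sequentially"
    by (rule order_tendstoD(2))
  then obtain i where "(\<integral>\<^sup>+x\<in>{a..<b}. ennreal ((norm (f x - F i x))\<^sup>2) \<partial>M) < ennreal e"
    by (auto simp: eventually_sequentially)
  then show ?thesis using F(1) by blast
qed

end

lemma three_sq: "(x + y + z)\<^sup>2 \<le> 3 * (x\<^sup>2 + y\<^sup>2 + (z::real)\<^sup>2)"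
proof -
  have "0 \<le> (x - y)\<^sup>2 + (y - z)\<^sup>2 + (x - z)\<^sup>2" by simp
  then show ?thesis by (simp add: power2_eq_square algebra_simps)
qed

lemma enn3:
  fixes \<alpha> \<beta> \<gamma> :: real
  assumes "0 \<le> \<alpha>" "0 \<le> \<beta>" "0 \<le> \<gamma>"
  shows "ennreal (3 * \<alpha> + 3 * \<beta> + 3 * \<gamma>) = ennreal 3 * ennreal \<alpha> + ennreal 3 * ennreal \<beta> + ennreal 3 * ennreal \<gamma>"
proof -
  have "ennreal (3 * \<alpha> + 3 * \<beta> + 3 * \<gamma>) = ennreal (3 * \<alpha> + 3 * \<beta>) + ennreal (3 * \<gamma>)"
    by (rule ennreal_plus) (use assms in auto)
  also have "ennreal (3 * \<alpha> + 3 * \<beta>) = ennreal (3 * \<alpha>) + ennreal (3 * \<beta>)"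
    by (rule ennreal_plus) (use assms in auto)
  also have "ennreal (3 * \<alpha>) = ennreal 3 * ennreal \<alpha>" by (rule ennreal_mult) (use assms in auto)
  also have "ennreal (3 * \<beta>) = ennreal 3 * ennreal \<beta>" by (rule ennreal_mult) (use assms in auto)
  also have "ennreal (3 * \<gamma>) = ennreal 3 * ennreal \<gamma>" by (rule ennreal_mult) (use assms in auto)
  finally show ?thesis .
qed

context drv begin

lemma UC_imp_L2:
  assumes dUC: "dense_UCg g a b (gpolys g a b :: (real \<Rightarrow> 'f::{real_normed_field, banach, second_countable_topology}) set)"
  shows "dense_L2g g a b (gpolys g a b :: (real \<Rightarrow> 'f) set)"
  unfolding dense_L2g_def
proof (intro allI impI)
  fix f :: "real \<Rightarrow> 'f" and e :: real
  assume fL2: "in_L2g g a b f" and e: "e > 0"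
  define e' where "e' = e / 10"
  have e': "e' > 0" using e by (simp add: e'_def)
  have fm[measurable]: "f \<in> borel_measurable (completion M)"
    and fL: "(\<integral>\<^sup>+x\<in>{a..<b}. ennreal ((norm (f x))\<^sup>2) \<partial>M) < \<infinity>"
    using fL2 unfolding in_L2g_def by auto
  obtain s where s: "simple_function (completion M) s"
    and sL: "(\<integral>\<^sup>+x\<in>{a..<b}. ennreal ((norm (f x - s x))\<^sup>2) \<partial>M) < ennreal e'"
    using simple_L2_approx[OF fm fL e'] by blast
  have sm[measurable]: "s \<in> borel_measurable (completion M)" by (rule borel_measurable_simple_function[OF s])
  define R where "R = s ` UNIV"
  have R: "finite R" using simple_functionD(1)[OF s] unfolding R_def by simp
  have Rs: "s -` {v} \<in> sets (completion M)" for v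
    using simple_functionD(2)[OF s, of "{v}"] by simp
  define K where "K = (\<Sum>v\<in>R. norm v)"
  have K0: "0 \<le> K" unfolding K_def by (rule sum_nonneg) simp
  define \<delta> where "\<delta> = e' / (K * K + 1)"
  have "0 < K * K + 1" using K0 by (simp add: add_nonneg_pos)
  then have \<delta>: "\<delta> > 0" using e' by (simp add: \<delta>_def)
  have "\<forall>v\<in>R. \<exists>u::real\<Rightarrow>real. u \<in> borel_measurable borel \<and> UCg g a b u \<and> (\<forall>x. 0 \<le> u x \<and> u x \<le> 1) \<and>
     (\<integral>\<^sup>+x\<in>{a..<b}. ennreal \<bar>indicator (s -` {v}) x - u x\<bar> \<partial>M) < ennreal \<delta>"
    using approx_completion[OF Rs] \<delta> unfolding approxable_def by blast
  from bchoice[OF this] obtain U :: "'f \<Rightarrow> real \<Rightarrow> real" where U0: "\<forall>v\<in>R. U v \<in> borel_measurable borel \<and> UCg g a b (U v) \<and> (\<forall>x. 0 \<le> U v x \<and> U v x \<le> 1) \<and>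
     (\<integral>\<^sup>+x\<in>{a..<b}. ennreal \<bar>indicator (s -` {v}) x - U v x\<bar> \<partial>M) < ennreal \<delta>"
    by (elim exE) (rule that)
  have U: "\<And>v. v \<in> R \<Longrightarrow> U v \<in> borel_measurable borel"
    "\<And>v. v \<in> R \<Longrightarrow> UCg g a b (U v)" "\<And>v x. v \<in> R \<Longrightarrow> 0 \<le> U v x" "\<And>v x. v \<in> R \<Longrightarrow> U v x \<le> 1"
    "\<And>v. v \<in> R \<Longrightarrow> (\<integral>\<^sup>+x\<in>{a..<b}. ennreal \<bar>indicator (s -` {v}) x - U v x\<bar> \<partial>M) < ennreal \<delta>"
    using U0 by blast+
  define w where "w x = (\<Sum>v\<in>R. v * of_real (U v x))" for x
  have wUC: "UCg g a b w" unfolding w_def using R by (intro UCg_sum UCg_scale U(2))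
  define m where "m = measure M UNIV"
  have m0: "0 \<le> m" by (simp add: m_def)
  define r where "r = sqrt (e' / (m + 1))"
  have r: "r > 0" "r\<^sup>2 * m \<le> e'" using e' m0 by (auto simp: r_def field_simps)
  obtain p where p: "p \<in> gpolys g a b" and pS: "(SUP x\<in>{a..b}. ereal (norm (w x - p x))) < ereal r"
    using dUC wUC r unfolding dense_UCg_def by blast
  have wp: "norm (w x - p x) \<le> r" if "x \<in> {a..b}" for x
  proof -
    have "ereal (norm (w x - p x)) \<le> (SUP x\<in>{a..b}. ereal (norm (w x - p x)))"
      using that by (rule SUP_upper)
    then have "ereal (norm (w x - p x)) < ereal r" using pS by (rule le_less_trans)
    then show ?thesis by simp
  qed
  define Ds where "Ds x = (\<Sum>v\<in>R. norm v * \<bar>indicator (s -` {v}) x - U v x\<bar>)" for x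
  have sw: "(norm (s x - w x))\<^sup>2 \<le> K * Ds x" for x
  proof -
    have sx: "s x = (\<Sum>v\<in>R. v * of_real (indicator (s -` {v}) x))"
    proof -
      have "(\<Sum>v\<in>R. v * of_real (indicator (s -` {v}) x)) = (\<Sum>v\<in>R. if v = s x then v else 0)"
        by (intro sum.cong) (auto simp: indicator_def)
      also have "\<dots> = s x" using R by (simp add: R_def)
      finally show ?thesis by simp
    qed
    have "norm (s x - w x) = norm (\<Sum>v\<in>R. v * of_real (indicator (s -` {v}) x - U v x))"
      unfolding sx w_def by (simp add: sum_subtractf[symmetric] right_diff_distrib)
    also have "\<dots> \<le> (\<Sum>v\<in>R. norm (v * of_real (indicator (s -` {v}) x - U v x)))" by (rule norm_sum)
    also have "\<dots> = Ds x" unfolding Ds_def by (simp add: norm_mult of_real_diff[symmetric] del: of_real_diff)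
    finally have n1: "norm (s x - w x) \<le> Ds x" .
    have d1: "\<bar>indicator (s -` {v}) x - U v x\<bar> \<le> 1" if "v \<in> R" for v
      using U(3,4)[OF that, of x] by (auto simp: indicator_def)
    have "Ds x \<le> (\<Sum>v\<in>R. norm v * 1)" unfolding Ds_def
      by (intro sum_mono mult_left_mono d1) auto
    then have n2: "Ds x \<le> K" by (simp add: K_def)
    have "(norm (s x - w x))\<^sup>2 = norm (s x - w x) * norm (s x - w x)" by (simp add: power2_eq_square)
    also have "\<dots> \<le> K * Ds x"
      using n1 n2 K0 by (intro mult_mono) auto
    finally show ?thesis .
  qed
  have Um[measurable]: "v \<in> R \<Longrightarrow> U v \<in> borel_measurable (completion M)" for v
    using meas_M[OF U(1)] by (auto intro: measurable_completion)
  have indm[measurable]: "indicator (s -` {v}) \<in> borel_measurable (completion M)" for v :: 'f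
    using Rs by (simp add: borel_measurable_indicator_iff)
  have abm[measurable]: "{a..<b} \<in> sets (completion M)" by simp
  have SW: "(\<integral>\<^sup>+x\<in>{a..<b}. ennreal ((norm (s x - w x))\<^sup>2) \<partial>completion M) \<le> ennreal e'"
  proof -
    have "(\<integral>\<^sup>+x\<in>{a..<b}. ennreal ((norm (s x - w x))\<^sup>2) \<partial>completion M) \<le>
        (\<integral>\<^sup>+x. (\<Sum>v\<in>R. ennreal (K * norm v) * (ennreal \<bar>indicator (s -` {v}) x - U v x\<bar> * indicator {a..<b} x)) \<partial>completion M)"
    proof (intro nn_integral_mono)
      fix x
      have "ennreal ((norm (s x - w x))\<^sup>2) \<le> ennreal (K * Ds x)" by (intro ennreal_leI sw)
      also have "\<dots> = (\<Sum>v\<in>R. ennreal (K * norm v) * ennreal \<bar>indicator (s -` {v}) x - U v x\<bar>)"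
        unfolding Ds_def sum_distrib_left using K0
        by (subst sum_ennreal[symmetric]) (auto simp: ennreal_mult mult.assoc)
      finally show "ennreal ((norm (s x - w x))\<^sup>2) * indicator {a..<b} x \<le>
          (\<Sum>v\<in>R. ennreal (K * norm v) * (ennreal \<bar>indicator (s -` {v}) x - U v x\<bar> * indicator {a..<b} x))"
        by (cases "x \<in> {a..<b}") auto
    qed
    also have "\<dots> = (\<Sum>v\<in>R. ennreal (K * norm v) * (\<integral>\<^sup>+x\<in>{a..<b}. ennreal \<bar>indicator (s -` {v}) x - U v x\<bar> \<partial>completion M))"
    proof (subst nn_integral_sum)
      show "(\<lambda>x. ennreal (K * norm v) * (ennreal \<bar>indicator (s -` {v}) x - U v x\<bar> * indicator {a..<b} x)) \<in> borel_measurable (completion M)"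
        if "v \<in> R" for v using that by measurable
      show "(\<Sum>v\<in>R. \<integral>\<^sup>+ x. ennreal (K * norm v) * (ennreal \<bar>indicator (s -` {v}) x - U v x\<bar> * indicator {a..<b} x) \<partial>completion M) =
          (\<Sum>v\<in>R. ennreal (K * norm v) * (\<integral>\<^sup>+x\<in>{a..<b}. ennreal \<bar>indicator (s -` {v}) x - U v x\<bar> \<partial>completion M))"
        by (intro sum.cong refl nn_integral_cmult) measurable
    qed
    also have "\<dots> \<le> (\<Sum>v\<in>R. ennreal (K * norm v) * ennreal \<delta>)"
      using U(5) by (intro sum_mono mult_left_mono) (auto simp: nn_integral_completion less_imp_le)
    also have "\<dots> = ennreal (K * K * \<delta>)"
      using K0 \<delta> by (simp add: ennreal_mult[symmetric] sum_distrib_right[symmetric] K_def sum_distrib_left del: ennreal_mult)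
    also have "\<dots> \<le> ennreal e'"
    proof (intro ennreal_leI)
      have pos: "0 < 1 + K * K" using K0 by (simp add: add_pos_nonneg)
      have "K * K * \<delta> = e' * (K * K) / (1 + K * K)" by (simp add: \<delta>_def add.commute)
      also have "\<dots> \<le> e' * (1 + K * K) / (1 + K * K)"
        using pos e' by (intro divide_right_mono mult_left_mono) auto
      also have "\<dots> = e'" using pos by simp
      finally show "K * K * \<delta> \<le> e'" .
    qed
    finally show ?thesis .
  qed
  have pt: "ennreal ((norm (f x - p x))\<^sup>2) * indicator {a..<b} x \<le>
      ennreal 3 * (ennreal ((norm (f x - s x))\<^sup>2) * indicator {a..<b} x) +
      ennreal 3 * (ennreal ((norm (s x - w x))\<^sup>2) * indicator {a..<b} x) +
      ennreal 3 * (ennreal (r\<^sup>2) * indicator {a..<b} x)" for x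
  proof (cases "x \<in> {a..<b}")
    case False
    then show ?thesis by simp
  next
    case True
    have "norm (f x - p x) \<le> norm (f x - s x) + norm (s x - w x) + norm (w x - p x)"
      using norm_triangle_ineq[of "f x - s x" "s x - w x"] norm_triangle_ineq[of "f x - w x" "w x - p x"]
      by (simp add: algebra_simps)
    then have "(norm (f x - p x))\<^sup>2 \<le> (norm (f x - s x) + norm (s x - w x) + norm (w x - p x))\<^sup>2"
      by (intro power_mono) auto
    also have "\<dots> \<le> 3 * ((norm (f x - s x))\<^sup>2 + (norm (s x - w x))\<^sup>2 + (norm (w x - p x))\<^sup>2)" by (rule three_sq)
    also have "(norm (w x - p x))\<^sup>2 \<le> r\<^sup>2" using wp[of x] True by (intro power_mono) auto
    finally have "(norm (f x - p x))\<^sup>2 \<le> 3 * (norm (f x - s x))\<^sup>2 + 3 * (norm (s x - w x))\<^sup>2 + 3 * r\<^sup>2"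
      by simp
    then have "ennreal ((norm (f x - p x))\<^sup>2) \<le> ennreal (3 * (norm (f x - s x))\<^sup>2 + 3 * (norm (s x - w x))\<^sup>2 + 3 * r\<^sup>2)"
      by (rule ennreal_leI)
    also have "\<dots> = ennreal 3 * ennreal ((norm (f x - s x))\<^sup>2) + ennreal 3 * ennreal ((norm (s x - w x))\<^sup>2) + ennreal 3 * ennreal (r\<^sup>2)"
      by (rule enn3) auto
    finally show ?thesis using True by simp
  qed
  have "(\<integral>\<^sup>+x\<in>{a..<b}. ennreal ((norm (f x - p x))\<^sup>2) \<partial>M) = (\<integral>\<^sup>+x\<in>{a..<b}. ennreal ((norm (f x - p x))\<^sup>2) \<partial>completion M)"
    by (simp add: nn_integral_completion)
  also have "\<dots> \<le> (\<integral>\<^sup>+x. ennreal 3 * (ennreal ((norm (f x - s x))\<^sup>2) * indicator {a..<b} x) +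
      ennreal 3 * (ennreal ((norm (s x - w x))\<^sup>2) * indicator {a..<b} x) +
      ennreal 3 * (ennreal (r\<^sup>2) * indicator {a..<b} x) \<partial>completion M)"
    by (intro nn_integral_mono pt)
  also have "\<dots> = ennreal 3 * (\<integral>\<^sup>+x\<in>{a..<b}. ennreal ((norm (f x - s x))\<^sup>2) \<partial>completion M) +
      ennreal 3 * (\<integral>\<^sup>+x\<in>{a..<b}. ennreal ((norm (s x - w x))\<^sup>2) \<partial>completion M) +
      ennreal 3 * (\<integral>\<^sup>+x. ennreal (r\<^sup>2) * indicator {a..<b} x \<partial>completion M)"
    using wUC by (simp add: nn_integral_add nn_integral_cmult w_def)
  also have "\<dots> \<le> ennreal 3 * ennreal e' + ennreal 3 * ennreal e' + ennreal 3 * ennreal e'"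
  proof (intro add_mono mult_left_mono order_refl)
    show "(\<integral>\<^sup>+x\<in>{a..<b}. ennreal ((norm (f x - s x))\<^sup>2) \<partial>completion M) \<le> ennreal e'"
      using sL by (simp add: nn_integral_completion)
    show "(\<integral>\<^sup>+x\<in>{a..<b}. ennreal ((norm (s x - w x))\<^sup>2) \<partial>completion M) \<le> ennreal e'" by (rule SW)
    have "(\<integral>\<^sup>+x. ennreal (r\<^sup>2) * indicator {a..<b} x \<partial>completion M) = ennreal (r\<^sup>2) * emeasure M {a..<b}"
      by (simp add: nn_integral_cmult_indicator)
    also have "\<dots> \<le> ennreal (r\<^sup>2) * emeasure M UNIV" by (intro mult_left_mono emeasure_mono) auto
    also have "\<dots> = ennreal (r\<^sup>2 * m)" by (simp add: m_def M.emeasure_eq_measure ennreal_mult)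
    also have "\<dots> \<le> ennreal e'" using r by (intro ennreal_leI) auto
    finally show "(\<integral>\<^sup>+x. ennreal (r\<^sup>2) * indicator {a..<b} x \<partial>completion M) \<le> ennreal e'" .
  qed auto
  also have "\<dots> = ennreal (3 * e' + 3 * e' + 3 * e')" using enn3[of e' e' e'] e' by simp
  also have "3 * e' + 3 * e' + 3 * e' = 9 * e'" by simp
  also have "\<dots> < ennreal e" using e by (simp add: e'_def ennreal_lessI)
  finally show "\<exists>p\<in>gpolys g a b. (\<integral>\<^sup>+x\<in>{a..<b}. ennreal ((norm (f x - p x))\<^sup>2) \<partial>M) < ennreal e"
    using p by blast
qed

end

theorem mainTheorem7:
  assumes "derivator g a b"
  shows "(dense_L2g g a b (gpolys g a b :: (real \<Rightarrow> real) set) \<longleftrightarrow>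
            dense_UCg g a b (gpolys g a b :: (real \<Rightarrow> real) set)) \<and>
         (dense_L2g g a b (gpolys g a b :: (real \<Rightarrow> complex) set) \<longleftrightarrow>
            dense_UCg g a b (gpolys g a b :: (real \<Rightarrow> complex) set))"
proof -
  interpret drv g a b by unfold_locales (rule assms)
  have r: "dense_L2g g a b (gpolys g a b :: (real \<Rightarrow> real) set) \<longleftrightarrow>
            dense_UCg g a b (gpolys g a b :: (real \<Rightarrow> real) set)"
    using L2_imp_UC[where 'f=real] UC_imp_L2[where 'f=real] by blast
  have c: "dense_L2g g a b (gpolys g a b :: (real \<Rightarrow> complex) set) \<longleftrightarrow>
            dense_UCg g a b (gpolys g a b :: (real \<Rightarrow> complex) set)"
    using L2_imp_UC[where 'f=complex] UC_imp_L2[where 'f=complex] by blast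
  show ?thesis using r c by blast
qed

end
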